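(* Let $(\mathcal X,\rho)$ be a non-empty Polish metric space with Borel $\sigma$-field $\mathfrak B(\mathcal X)$, and let $\mathcal Y\in\mathfrak B(\mathcal X)$ satisfy $$c_{x,0}\,s^{-\gamma}\le \log \mathcal N_{\mathcal X}(s,\mathcal Y,\rho)\le c_{x,1}\,s^{-\gamma}\qquad\text{for all } s\in(0,s_0),$$ for constants $s_0>0$, $0<c_{x,0}<c_{x,1}$, $\gamma>0$. Fix $C>0$, $\beta\in(0,1]$. For $\kappa>0$ let $\mathcal P_{C,\beta,\kappa}$ be the set of pairs $(P_X,P_Y)$ of probability measures on $\mathfrak B(\mathcal X)$ with $P_X(\mathcal Y)=P_Y(\mathcal Y)=1$, $\operatorname{TV}(P_X,P_Y)\ge\kappa$, and such that there is a Borel set $\mathcal Y_0\subseteq\mathcal Y$ with $(P_X+P_Y)(\mathcal Y_0)=2$ and $|p_X(y)-p_X(z)|\le C\rho(y,z)^\beta$ for all $y,z\in\mathcal Y_0$, where $p_X=\mathrm dP_X/\mathrm d(P_X+P_Y)$. Supervised classification model: the training sample $(Z_1,W_1),\dots,(Z_n,W_n)$ is i.i.d., $W_j\in\{0,1\}$, $P[W_1=1]=w$ for a fixed $w\in(0,1)$, and conditionally on $W_j=0$ (resp. $W_j=1$) $Z_j$ has law $P_X$ (resp. $P_Y$); an observation $Z$, independent of the training sample, has law $P_X$ or $P_Y$. A classifier $\varphi_n$ is a Borel measurable map $\mathcal X^n\times\{0,1\}^n\times\mathcal X\to\{0,1\}$ evaluated at $(Z_1,\dots,Z_n,W_1,\dots,W_n,Z)$.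 Its excess risk is $$\mathcal E_n(\varphi_n)=\sup_{(P_X,P_Y)\in\mathcal P_{C,\beta,\kappa}}\big(P_{X,Y,X}[\varphi_n=1]+P_{X,Y,Y}[\varphi_n=0]-1+\operatorname{TV}(P_X,P_Y)\big),$$ where $P_{X,Y,X}$, $P_{X,Y,Y}$ denote the probability when $Z$ has law $P_X$, respectively $P_Y$. Then there exists $\kappa_0>0$ (not depending on $n$) such that for every $\kappa\in(0,\kappa_0)$ and every sequence of classifiers $\{\varphi_n\}_n$, $$\liminf_{n\to\infty}(\log n)^{\beta/\gamma}\,\mathcal E_n(\varphi_n)>0.$$
   Context: $\mathcal N_{\mathcal X}(\delta,\mathcal Y,\rho)$ denotes the minimal number of open $\rho$-balls in $\mathcal X$ of radius $\delta$ whose union contains $\mathcal Y$. $\operatorname{TV}(P,Q)=\sup_{A\in\mathfrak B(\mathcal X)}|P(A)-Q(A)|$. *)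

theory Defs
  imports "HOL-Probability.Probability"
begin

text \<open>If no finite cover exists the Inf of the
  empty set of naturals is 0; under the hypotheses of the theorem this never happens.\<close>
definition covering_number :: "real \<Rightarrow> 'a::metric_space set \<Rightarrow> nat" where
  "covering_number d Y = Inf {card C | C. finite C \<and> Y \<subseteq> (\<Union>c\<in>C. ball c d)}"

definition tv_dist :: "'a::topological_space measure \<Rightarrow> 'a measure \<Rightarrow> real" where
  "tv_dist P Q = (SUP A\<in>sets borel. \<bar>measure P A - measure Q A\<bar>)"

definition measure_add :: "'a measure \<Rightarrow> 'a measure \<Rightarrow> 'a measure" where
  "measure_add M N = measure_of (space M) (sets M) (\<lambda>A. emeasure M A + emeasure N A)"

definition borel_prob :: "'a::topological_space measure \<Rightarrow> bool" where
  "borel_prob P \<longleftrightarrow> prob_space P \<and> sets P = sets borel"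

definition model_class ::
  "'a::metric_space set \<Rightarrow> real \<Rightarrow> real \<Rightarrow> real \<Rightarrow> ('a measure \<times> 'a measure) set" where
  "model_class Y C \<beta> \<kappa> = {(PX, PY). borel_prob PX \<and> borel_prob PY \<and>
     measure PX Y = 1 \<and> measure PY Y = 1 \<and> tv_dist PX PY \<ge> \<kappa> \<and>
     (\<exists>Y0 \<in> sets borel. Y0 \<subseteq> Y \<and> measure (measure_add PX PY) Y0 = 2 \<and>
        (\<forall>y\<in>Y0. \<forall>z\<in>Y0.
           \<bar>enn2real (RN_deriv (measure_add PX PY) PX y) - enn2real (RN_deriv (measure_add PX PY) PX z)\<bar>
             \<le> C * dist y z powr \<beta>))}"

text \<open>Measurable space of the inputs of a classifier with n training points:
  (Z_1..Z_n, W_1..W_n), Z.  W_j = True encodes label 1.\<close>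
definition classifier_space :: "nat \<Rightarrow> (((nat \<Rightarrow> 'a::topological_space) \<times> (nat \<Rightarrow> bool)) \<times> 'a) measure" where
  "classifier_space n = (PiM {..<n} (\<lambda>_. borel) \<Otimes>\<^sub>M PiM {..<n} (\<lambda>_. count_space UNIV)) \<Otimes>\<^sub>M borel"

definition is_classifier :: "nat \<Rightarrow> ((nat \<Rightarrow> 'a::topological_space) \<Rightarrow> (nat \<Rightarrow> bool) \<Rightarrow> 'a \<Rightarrow> bool) \<Rightarrow> bool" where
  "is_classifier n \<phi> \<longleftrightarrow> (\<lambda>((zs, ws), z). \<phi> zs ws z) \<in> measurable (classifier_space n) (count_space UNIV)"

text \<open>Probability that phi outputs label v when the training sample is i.i.d. with
  W_j ~ Bernoulli(w), Z_j | W_j=0 ~ PX, Z_j | W_j=1 ~ PY, and the independent test point Z ~ PZ.\<close>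
definition prob_output ::
  "nat \<Rightarrow> real \<Rightarrow> 'a::topological_space measure \<Rightarrow> 'a measure \<Rightarrow> 'a measure \<Rightarrow>
   ((nat \<Rightarrow> 'a) \<Rightarrow> (nat \<Rightarrow> bool) \<Rightarrow> 'a \<Rightarrow> bool) \<Rightarrow> bool \<Rightarrow> real" where
  "prob_output n w PX PY PZ \<phi> v =
     (\<Sum>ws\<in>PiE {..<n} (\<lambda>_. UNIV :: bool set).
        w ^ card {j\<in>{..<n}. ws j} * (1 - w) ^ card {j\<in>{..<n}. \<not> ws j} *
        measure (PiM {..<n} (\<lambda>j. if ws j then PY else PX) \<Otimes>\<^sub>M PZ)
          {(zs, z) \<in> space (PiM {..<n} (\<lambda>j. if ws j then PY else PX) \<Otimes>\<^sub>M PZ). \<phi> zs ws z = v})"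

definition excess_risk ::
  "'a::metric_space set \<Rightarrow> real \<Rightarrow> real \<Rightarrow> real \<Rightarrow> nat \<Rightarrow> real \<Rightarrow>
   ((nat \<Rightarrow> 'a) \<Rightarrow> (nat \<Rightarrow> bool) \<Rightarrow> 'a \<Rightarrow> bool) \<Rightarrow> real" where
  "excess_risk Y C \<beta> \<kappa> n w \<phi> =
     (SUP (PX, PY) \<in> model_class Y C \<beta> \<kappa>.
        prob_output n w PX PY PX \<phi> True + prob_output n w PX PY PY \<phi> False - 1 + tv_dist PX PY)"

end

theory Submission
  imports Defs
begin


definition disc :: "'a set \<Rightarrow> ('a \<Rightarrow> real) \<Rightarrow> 'a::metric_space measure" where
  "disc S m = distr (point_measure S (\<lambda>x. ennreal (m x))) borel id"

lemma sets_disc[simp, measurable_cong]: "sets (disc S m) = sets borel"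
  by (simp add: disc_def)

lemma space_disc[simp]: "space (disc S m) = UNIV"
  by (simp add: disc_def)

lemma finite_borel: "finite (A::'a::metric_space set) \<Longrightarrow> A \<in> sets borel"
  by (simp add: borel_closed finite_imp_closed)

lemma emeasure_disc:
  assumes "finite S" "A \<in> sets borel"
  shows "emeasure (disc S m) A = (\<Sum>x\<in>S\<inter>A. ennreal (m x))"
proof -
  have "emeasure (disc S m) A = emeasure (point_measure S (\<lambda>x. ennreal (m x))) (id -` A \<inter> space (point_measure S (\<lambda>x. ennreal (m x))))"
    unfolding disc_def using assms
    by (intro emeasure_distr) (auto simp: measurable_count_space_eq1 space_point_measure)
  also have "\<dots> = (\<Sum>x\<in>S\<inter>A. ennreal (m x))"
    using assms by (subst emeasure_point_measure_finite) (auto simp: space_point_measure intro: sum.cong)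
  finally show ?thesis .
qed

lemma measure_disc:
  assumes "finite S" "A \<in> sets borel" "\<And>x. x \<in> S \<Longrightarrow> m x \<ge> 0"
  shows "measure (disc S m) A = (\<Sum>x\<in>S\<inter>A. m x)"
proof -
  have "(\<Sum>x\<in>S\<inter>A. ennreal (m x)) = ennreal (\<Sum>x\<in>S\<inter>A. m x)"
    using assms by (intro sum_ennreal) auto
  moreover have "0 \<le> (\<Sum>x\<in>S\<inter>A. m x)" using assms by (intro sum_nonneg) auto
  ultimately show ?thesis using assms by (simp add: measure_def emeasure_disc)
qed

lemma prob_disc:
  assumes "finite S" "\<And>x. x \<in> S \<Longrightarrow> m x \<ge> 0" "(\<Sum>x\<in>S. m x) = 1"
  shows "borel_prob (disc S m)"
  unfolding borel_prob_def
proof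
  show "prob_space (disc S m)"
    by (rule prob_spaceI) (use assms in \<open>simp add: emeasure_disc sum_ennreal\<close>)
qed simp

lemma nn_integral_disc:
  assumes "finite S" 
  shows "(\<integral>\<^sup>+x. f x \<partial>disc S m) = (\<Sum>y\<in>S. ennreal (m y) * f y)"
proof -
  have "AE x in disc S m. x \<in> S"
  proof (rule AE_I[where N="UNIV - S"])
    have o: "UNIV - S \<in> sets borel" using assms by (intro borel_open open_Diff finite_imp_closed) auto
    then show "UNIV - S \<in> sets (disc S m)" by simp
    show "emeasure (disc S m) (UNIV - S) = 0" using assms o by (simp add: emeasure_disc)
  qed auto
  then have "(\<integral>\<^sup>+x. f x \<partial>disc S m) = (\<integral>\<^sup>+x. (\<Sum>y\<in>S. f y * indicator {y} x) \<partial>disc S m)"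
  proof (intro nn_integral_cong_AE, eventually_elim)
    case (elim x)
    then have "(\<Sum>y\<in>S. f y * indicator {y} x) = (\<Sum>y\<in>S. if y = x then f x else 0)"
      by (intro sum.cong) (auto simp: indicator_def)
    also have "\<dots> = f x" using elim assms by simp
    finally show ?case by simp
  qed
  also have "\<dots> = (\<Sum>y\<in>S. (\<integral>\<^sup>+x. f y * indicator {y} x \<partial>disc S m))"
    by (intro nn_integral_sum) auto
  also have "\<dots> = (\<Sum>y\<in>S. ennreal (m y) * f y)"
    using assms by (intro sum.cong refl) (auto simp: nn_integral_cmult_indicator emeasure_disc finite_borel mult.commute Int_absorb1 cong: if_cong)
  finally show ?thesis .
qed

lemma measure_space_add:
  assumes "sets M = sets N"
  shows "measure_space (space M) (sets M) (\<lambda>A. emeasure M A + emeasure N A)"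
proof -
  have sp: "space M = space N" using assms sets_eq_imp_space_eq by blast
  show ?thesis
    unfolding measure_space_def
  proof (intro conjI)
    show "sigma_algebra (space M) (sets M)" by (rule sets.sigma_algebra_axioms)
    show "positive (sets M) (\<lambda>A. emeasure M A + emeasure N A)"
      by (simp add: positive_def)
    show "countably_additive (sets M) (\<lambda>A. emeasure M A + emeasure N A)"
      unfolding countably_additive_def
    proof (intro allI impI)
      fix A :: "nat \<Rightarrow> _" assume A: "range A \<subseteq> sets M" "disjoint_family A" "\<Union> (range A) \<in> sets M"
      have "(\<Sum>i. emeasure M (A i) + emeasure N (A i)) = (\<Sum>i. emeasure M (A i)) + (\<Sum>i. emeasure N (A i))"
        by (rule suminf_add[symmetric]) auto
      also have "\<dots> = emeasure M (\<Union> (range A)) + emeasure N (\<Union> (range A))"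
        using A assms by (simp add: suminf_emeasure)
      finally show "(\<Sum>i. emeasure M (A i) + emeasure N (A i)) = emeasure M (\<Union> (range A)) + emeasure N (\<Union> (range A))" .
    qed
  qed
qed

lemma emeasure_measure_add:
  assumes "sets M = sets N" "A \<in> sets M"
  shows "emeasure (measure_add M N) A = emeasure M A + emeasure N A"
  unfolding measure_add_def
  using measure_space_add[OF assms(1)] assms(2)
  by (intro emeasure_measure_of_sigma) (auto simp: measure_space_def)

lemma sets_measure_add[simp]: "sets (measure_add M N) = sets M"
  unfolding measure_add_def by simp

lemma measure_add_disc:
  assumes "finite S" "\<And>x. x \<in> S \<Longrightarrow> a x \<ge> 0" "\<And>x. x \<in> S \<Longrightarrow> b x \<ge> 0"
  shows "measure_add (disc S a) (disc S b) = disc S (\<lambda>x. a x + b x)"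
proof (rule measure_eqI)
  fix A assume A: "A \<in> sets (measure_add (disc S a) (disc S b))"
  then show "emeasure (measure_add (disc S a) (disc S b)) A = emeasure (disc S (\<lambda>x. a x + b x)) A"
    using assms by (simp add: emeasure_measure_add emeasure_disc sum.distrib[symmetric] ennreal_plus)
qed simp

lemma weights_sum:
  fixes w :: real and n :: nat
  shows "(\<Sum>ws\<in>PiE {..<n} (\<lambda>_. UNIV :: bool set).
        w ^ card {j\<in>{..<n}. ws j} * (1 - w) ^ card {j\<in>{..<n}. \<not> ws j}) = 1"
proof -
  have "(\<Prod>j\<in>{..<n}. \<Sum>b\<in>(UNIV::bool set). (if b then w else 1 - w)) =
        (\<Sum>ws\<in>PiE {..<n} (\<lambda>_. UNIV :: bool set). \<Prod>j\<in>{..<n}. (if ws j then w else 1 - w))"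
    by (rule prod_sum_PiE) auto
  moreover have "(\<Prod>j\<in>{..<n}. (if ws j then w else 1 - w)) = w ^ card {j\<in>{..<n}. ws j} * (1 - w) ^ card {j\<in>{..<n}. \<not> ws j}" for ws
    proof -
    have e1: "{..<n} \<inter> Collect ws = {j\<in>{..<n}. ws j}" "{..<n} \<inter> - Collect ws = {j\<in>{..<n}. \<not> ws j}" by auto
    show ?thesis by (subst prod.If_cases) (simp_all add: e1)
  qed
  moreover have "(\<Sum>b\<in>(UNIV::bool set). (if b then w else 1 - w)) = 1"
    by (simp add: UNIV_bool)
  ultimately show ?thesis by simp
qed




lemma RN_disc:
  assumes S: "finite S" and nn: "\<And>x. x \<in> S \<Longrightarrow> a x \<ge> 0" "\<And>x. x \<in> S \<Longrightarrow> b x \<ge> 0"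
    and pos: "\<And>x. x \<in> S \<Longrightarrow> a x + b x > 0" and x: "x \<in> S"
  shows "RN_deriv (measure_add (disc S a) (disc S b)) (disc S a) x = ennreal (a x / (a x + b x))"
proof -
  define M where "M = disc S (\<lambda>x. a x + b x)"
  have madd: "measure_add (disc S a) (disc S b) = M"
    unfolding M_def using S nn by (rule measure_add_disc)
  define f where "f x = (\<Sum>y\<in>S. ennreal (a y / (a y + b y)) * indicator {y} x)" for x
  have fy: "f y = ennreal (a y / (a y + b y))" if "y \<in> S" for y
  proof -
    have "f y = (\<Sum>z\<in>S. if z = y then ennreal (a y / (a y + b y)) else 0)"
      unfolding f_def by (intro sum.cong) (auto simp: indicator_def)
    then show ?thesis using that S by simp
  qed
  have fm: "f \<in> borel_measurable M"
    unfolding f_def M_def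
    by (intro borel_measurable_sum borel_measurable_times_ennreal borel_measurable_const
          borel_measurable_indicator) (auto simp: finite_borel)
  have dens: "density M f = disc S a"
  proof (rule measure_eqI)
    fix A assume A: "A \<in> sets (density M f)"
    then have Ab: "A \<in> sets borel" by (simp add: M_def)
    have "emeasure (density M f) A = (\<integral>\<^sup>+y. f y * indicator A y \<partial>M)"
      using A fm by (simp add: emeasure_density M_def)
    also have "\<dots> = (\<Sum>y\<in>S. ennreal (a y + b y) * (f y * indicator A y))"
      unfolding M_def using S by (rule nn_integral_disc)
    also have "\<dots> = (\<Sum>y\<in>S. ennreal (a y) * indicator A y)"
    proof (intro sum.cong refl)
      fix y assume y: "y \<in> S"
      have "ennreal (a y + b y) * ennreal (a y / (a y + b y)) = ennreal ((a y + b y) * (a y / (a y + b y)))"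
        using nn y pos by (subst ennreal_mult[symmetric]) auto
      also have "\<dots> = ennreal (a y)" using pos[OF y] by simp
      finally show "ennreal (a y + b y) * (f y * indicator A y) = ennreal (a y) * indicator A y"
        using y by (simp add: fy mult.assoc[symmetric])
    qed
    also have "\<dots> = (\<Sum>y\<in>S\<inter>A. ennreal (a y))"
      using S by (simp add: sum.inter_restrict indicator_def if_distrib cong: if_cong)
    also have "\<dots> = emeasure (disc S a) A"
      using S Ab by (simp add: emeasure_disc)
    finally show "emeasure (density M f) A = emeasure (disc S a) A" .
  qed (simp add: M_def)
  have "finite_measure M"
    by (rule finite_measureI) (use S in \<open>simp add: M_def emeasure_disc\<close>)
  then interpret finite_measure M .
  have ae: "AE y in M. f y = RN_deriv M (disc S a) y"
    by (rule RN_deriv_unique[OF fm dens])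
  have "f x = RN_deriv M (disc S a) x"
  proof (rule ccontr)
    assume ne: "f x \<noteq> RN_deriv M (disc S a) x"
    from ae obtain N where N: "{y \<in> space M. \<not> f y = RN_deriv M (disc S a) y} \<subseteq> N" "emeasure M N = 0" "N \<in> sets M"
      by (auto elim!: AE_E)
    have "x \<in> N" using N(1) ne by (auto simp: M_def)
    then have "emeasure M {x} \<le> emeasure M N"
      using N(3) by (intro emeasure_mono) auto
    moreover have "emeasure M {x} = ennreal (a x + b x)"
      using S x by (simp add: M_def emeasure_disc finite_borel Int_absorb1)
    ultimately show False using N(2) pos[OF x] by simp
  qed
  then show ?thesis using fy[OF x] madd by simp
qed

lemma borel_prob_measure_le1:
  assumes "borel_prob P" shows "measure P A \<le> 1"
  using assms unfolding borel_prob_def by (auto intro: prob_space.prob_le_1)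

lemma tv_bdd:
  assumes "borel_prob P" "borel_prob Q"
  shows "bdd_above ((\<lambda>A. \<bar>measure P A - measure Q A\<bar>) ` sets borel)"
proof -
  have "\<bar>measure P A - measure Q A\<bar> \<le> 1" for A
    using borel_prob_measure_le1[OF assms(1), of A] borel_prob_measure_le1[OF assms(2), of A]
      measure_nonneg[of P A] measure_nonneg[of Q A] by linarith
  then show ?thesis by (intro bdd_aboveI[where M=1]) auto
qed

lemma tv_le1:
  assumes "borel_prob P" "borel_prob Q"
  shows "tv_dist P Q \<le> 1"
proof -
  have "\<bar>measure P A - measure Q A\<bar> \<le> 1" for A
    using borel_prob_measure_le1[OF assms(1), of A] borel_prob_measure_le1[OF assms(2), of A]
      measure_nonneg[of P A] measure_nonneg[of Q A] by linarith
  then show ?thesis unfolding tv_dist_def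
    by (intro cSUP_least) (auto simp: sets.top[of borel, simplified] intro!: exI[of _ "{}"])
qed

lemma tv_ge:
  assumes "borel_prob P" "borel_prob Q" "A \<in> sets borel"
  shows "\<bar>measure P A - measure Q A\<bar> \<le> tv_dist P Q"
  unfolding tv_dist_def using assms by (intro cSUP_upper tv_bdd)

lemma tv_disc:
  assumes S: "finite S" and nn: "\<And>x. x \<in> S \<Longrightarrow> a x \<ge> 0" "\<And>x. x \<in> S \<Longrightarrow> b x \<ge> 0"
    and "borel_prob (disc S a)" "borel_prob (disc S b)"
  shows "(\<Sum>x\<in>S. max 0 (a x - b x)) \<le> tv_dist (disc S a) (disc S b)"
proof -
  define A where "A = {x\<in>S. a x > b x}"
  have Ab: "A \<in> sets borel" unfolding A_def using S by (intro finite_borel) auto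
  have "measure (disc S a) A - measure (disc S b) A = (\<Sum>x\<in>S\<inter>A. a x - b x)"
    using S nn Ab by (simp add: measure_disc sum_subtractf)
  also have "\<dots> = (\<Sum>x\<in>S. max 0 (a x - b x))"
    using S by (intro sum.mono_neutral_cong_left) (auto simp: A_def max_def)
  finally show ?thesis using tv_ge[OF assms(4,5) Ab] by linarith
qed

lemma packing:
  fixes Y :: "'a::metric_space set"
  assumes "s > 0" "k \<le> covering_number s Y"
  shows "\<exists>F. F \<subseteq> Y \<and> finite F \<and> card F = k \<and> (\<forall>x\<in>F. \<forall>y\<in>F. x \<noteq> y \<longrightarrow> s \<le> dist x y)"
  using assms(2)
proof (induction k)
  case 0 then show ?case by (intro exI[of _ "{}"]) auto
next
  case (Suc k)
  then obtain F where F: "F \<subseteq> Y" "finite F" "card F = k" "\<forall>x\<in>F. \<forall>y\<in>F. x \<noteq> y \<longrightarrow> s \<le> dist x y"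
    by auto
  have "\<not> Y \<subseteq> (\<Union>c\<in>F. ball c s)"
  proof
    assume "Y \<subseteq> (\<Union>c\<in>F. ball c s)"
    then have "k \<in> {card C | C. finite C \<and> Y \<subseteq> (\<Union>c\<in>C. ball c s)}" using F by auto
    then have "covering_number s Y \<le> k" unfolding covering_number_def by (intro cInf_lower) auto
    then show False using Suc.prems by simp
  qed
  then have "\<exists>y\<in>Y. \<forall>c\<in>F. s \<le> dist c y" by (force simp: subset_eq not_less)
  then obtain y where y: "y \<in> Y" "\<forall>c\<in>F. s \<le> dist c y" by blast
  have yF: "y \<notin> F" using y(2) assms(1) by force
  show ?case
    using F y yF by (intro exI[of _ "insert y F"]) (auto simp: dist_commute)
qed




lemma sets_PiM_borel:
  assumes "\<And>j. sets (M j) = sets borel"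
  shows "sets (PiM I M) = sets (PiM I (\<lambda>_. borel))"
  using assms by (intro sets_PiM_cong) auto

lemma section_meas:
  assumes cl: "is_classifier n \<phi>" and ws: "ws \<in> PiE {..<n} (\<lambda>_. UNIV :: bool set)"
    and M: "\<And>j. sets (M j) = sets borel" and N: "sets N = sets borel"
  shows "(\<lambda>(zs, z). \<phi> zs ws z) \<in> measurable (PiM {..<n} M \<Otimes>\<^sub>M N) (count_space UNIV)"
proof -
  have F: "(\<lambda>((zs, ws), z). \<phi> zs ws z) \<in> measurable (classifier_space n) (count_space UNIV)"
    using cl by (simp add: is_classifier_def)
  have sP: "sets (PiM {..<n} M) = sets (PiM {..<n} (\<lambda>_. borel :: 'a measure))" by (rule sets_PiM_borel[OF M])
  have f1: "fst \<in> measurable (PiM {..<n} M \<Otimes>\<^sub>M N) (PiM {..<n} (\<lambda>_. borel))"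
    using measurable_fst[of "PiM {..<n} M" N] sP by (simp cong: measurable_cong_sets)
  have f2: "snd \<in> measurable (PiM {..<n} M \<Otimes>\<^sub>M N) borel"
    using measurable_snd[of "PiM {..<n} M" N] N by (simp cong: measurable_cong_sets)
  have f3: "(\<lambda>p. ws) \<in> measurable (PiM {..<n} M \<Otimes>\<^sub>M N) (PiM {..<n} (\<lambda>_. count_space UNIV))"
    using ws by (simp add: space_PiM)
  have h: "(\<lambda>p. ((fst p, ws), snd p)) \<in> measurable (PiM {..<n} M \<Otimes>\<^sub>M N) (classifier_space n)"
    unfolding classifier_space_def by (intro measurable_Pair f1 f2 f3)
  have "(\<lambda>((zs, ws), z). \<phi> zs ws z) \<circ> (\<lambda>p. ((fst p, ws), snd p)) \<in> measurable (PiM {..<n} M \<Otimes>\<^sub>M N) (count_space UNIV)"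
    by (rule measurable_comp[OF h F])
  then show ?thesis by (simp add: comp_def case_prod_beta')
qed

lemma section_meas1:
  assumes cl: "is_classifier n \<phi>" and ws: "ws \<in> PiE {..<n} (\<lambda>_. UNIV :: bool set)"
    and M: "\<And>j. sets (M j) = sets borel"
  shows "{zs \<in> space (PiM {..<n} M). \<phi> zs ws x = v} \<in> sets (PiM {..<n} M)"
proof -
  have m: "(\<lambda>(zs, z). \<phi> zs ws z) \<in> measurable (PiM {..<n} M \<Otimes>\<^sub>M (borel :: 'a measure)) (count_space UNIV)"
    by (rule section_meas[OF cl ws M]) simp
  have "(\<lambda>zs. (zs, x)) \<in> measurable (PiM {..<n} M) (PiM {..<n} M \<Otimes>\<^sub>M (borel :: 'a measure))"
    by simp
  from measurable_comp[OF this m] have "(\<lambda>zs. \<phi> zs ws x) \<in> measurable (PiM {..<n} M) (count_space UNIV)"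
    by (simp add: comp_def)
  from measurable_sets[OF this, of "{v}"] show ?thesis
    by (simp add: vimage_def Int_def conj_commute)
qed

lemma prob_space_Mws:
  assumes "borel_prob PX" "borel_prob PY"
  shows "prob_space (PiM I (\<lambda>j. if ws j then PY else PX))"
  using assms by (intro prob_space_PiM) (auto simp: borel_prob_def)

lemma prob_output_bounds:
  assumes "borel_prob PX" "borel_prob PY" "borel_prob PZ" "0 \<le> w" "w \<le> 1"
  shows "0 \<le> prob_output n w PX PY PZ \<phi> v \<and> prob_output n w PX PY PZ \<phi> v \<le> 1"
proof -
  let ?wt = "\<lambda>ws. w ^ card {j\<in>{..<n}. ws j} * (1 - w) ^ card {j\<in>{..<n}. \<not> ws j}"
  let ?m = "\<lambda>ws. measure (PiM {..<n} (\<lambda>j. if ws j then PY else PX) \<Otimes>\<^sub>M PZ)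
          {(zs, z) \<in> space (PiM {..<n} (\<lambda>j. if ws j then PY else PX) \<Otimes>\<^sub>M PZ). \<phi> zs ws z = v}"
  have ps: "prob_space (PiM {..<n} (\<lambda>j. if ws j then PY else PX) \<Otimes>\<^sub>M PZ)" for ws
    using assms by (intro prob_space_pair prob_space_Mws) (auto simp: borel_prob_def)
  have m1: "?m ws \<le> 1" for ws using prob_space.prob_le_1[OF ps] by blast
  have wt0: "0 \<le> ?wt ws" for ws using assms by simp
  have "prob_output n w PX PY PZ \<phi> v = (\<Sum>ws\<in>PiE {..<n} (\<lambda>_. UNIV). ?wt ws * ?m ws)"
    unfolding prob_output_def by simp
  moreover have "(\<Sum>ws\<in>PiE {..<n} (\<lambda>_. UNIV). ?wt ws * ?m ws) \<le> (\<Sum>ws\<in>PiE {..<n} (\<lambda>_. UNIV). ?wt ws)"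
    by (intro sum_mono mult_right_le_one_le wt0 m1 measure_nonneg)
  moreover have "0 \<le> (\<Sum>ws\<in>PiE {..<n} (\<lambda>_. UNIV). ?wt ws * ?m ws)"
    by (intro sum_nonneg mult_nonneg_nonneg wt0 measure_nonneg)
  ultimately show ?thesis using weights_sum[of w n] by simp
qed

lemma prob_output_disc:
  assumes cl: "is_classifier n \<phi>" and PX: "borel_prob PX" and PY: "borel_prob PY"
    and S: "finite S" and c: "\<And>x. x \<in> S \<Longrightarrow> c x \<ge> 0"
  shows "prob_output n w PX PY (disc S c) \<phi> v =
     (\<Sum>ws\<in>PiE {..<n} (\<lambda>_. UNIV :: bool set).
        w ^ card {j\<in>{..<n}. ws j} * (1 - w) ^ card {j\<in>{..<n}. \<not> ws j} *
        (\<Sum>x\<in>S. c x * measure (PiM {..<n} (\<lambda>j. if ws j then PY else PX))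
            {zs \<in> space (PiM {..<n} (\<lambda>j. if ws j then PY else PX)). \<phi> zs ws x = v}))"
  unfolding prob_output_def
proof (intro sum.cong refl arg_cong2[where f="(*)"])
  fix ws assume ws: "ws \<in> PiE {..<n} (\<lambda>_. UNIV :: bool set)"
  define M where "M = PiM {..<n} (\<lambda>j. if ws j then PY else PX)"
  have Ms: "\<And>j. sets (if ws j then PY else PX) = sets borel" using PX PY by (auto simp: borel_prob_def)
  have psM: "prob_space M" unfolding M_def using PX PY by (rule prob_space_Mws)
  have dps: "prob_space (disc S c)" if "(\<Sum>x\<in>S. c x) = 1" using prob_disc[OF S c that] by (simp add: borel_prob_def)
  interpret pM: prob_space M using psM .
  have "finite_measure (disc S c)"
    by (rule finite_measureI) (use S in \<open>simp add: emeasure_disc\<close>)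
  then interpret sfd: finite_measure "disc S c" .
  interpret pair_sigma_finite M "disc S c" by unfold_locales
  define E where "E = {(zs, z) \<in> space (M \<Otimes>\<^sub>M disc S c). \<phi> zs ws z = v}"
  have Em: "E \<in> sets (M \<Otimes>\<^sub>M disc S c)"
  proof -
    have "(\<lambda>(zs, z). \<phi> zs ws z) \<in> measurable (M \<Otimes>\<^sub>M disc S c) (count_space UNIV)"
      unfolding M_def by (rule section_meas[OF cl ws Ms]) simp
    from measurable_sets[OF this, of "{v}"] show ?thesis unfolding E_def
      by (simp add: vimage_def Int_def conj_commute case_prod_beta')
  qed
  have sec: "(\<lambda>x. (x, y)) -` E = {zs \<in> space M. \<phi> zs ws y = v}" for y
    by (auto simp: E_def space_pair_measure)
  have secm: "{zs \<in> space M. \<phi> zs ws y = v} \<in> sets M" for y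
    unfolding M_def by (rule section_meas1[OF cl ws Ms])
  have "emeasure (M \<Otimes>\<^sub>M disc S c) E = (\<integral>\<^sup>+y. emeasure M ((\<lambda>x. (x, y)) -` E) \<partial>disc S c)"
    by (rule emeasure_pair_measure_alt2[OF Em])
  also have "\<dots> = (\<Sum>y\<in>S. ennreal (c y) * emeasure M {zs \<in> space M. \<phi> zs ws y = v})"
    using S by (simp add: nn_integral_disc sec)
  also have "\<dots> = ennreal (\<Sum>y\<in>S. c y * measure M {zs \<in> space M. \<phi> zs ws y = v})"
    using c by (simp add: pM.emeasure_eq_measure ennreal_mult'' sum_ennreal[symmetric] measure_nonneg)
  finally have "measure (M \<Otimes>\<^sub>M disc S c) E = (\<Sum>y\<in>S. c y * measure M {zs \<in> space M. \<phi> zs ws y = v})"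
    using c by (simp add: measure_def sum_nonneg measure_nonneg)
  then show "measure (PiM {..<n} (\<lambda>j. if ws j then PY else PX) \<Otimes>\<^sub>M disc S c)
          {(zs, z) \<in> space (PiM {..<n} (\<lambda>j. if ws j then PY else PX) \<Otimes>\<^sub>M disc S c). \<phi> zs ws z = v} =
        (\<Sum>x\<in>S. c x * measure (PiM {..<n} (\<lambda>j. if ws j then PY else PX))
            {zs \<in> space (PiM {..<n} (\<lambda>j. if ws j then PY else PX)). \<phi> zs ws x = v})"
    by (simp add: M_def E_def)
qed




lemma emeasure_PiM_fin:
  assumes "finite I" "\<And>i. i \<in> I \<Longrightarrow> prob_space (M i)" "\<And>i. i \<in> I \<Longrightarrow> A i \<in> sets (M i)"
  shows "emeasure (PiM I M) (PiE I A) = (\<Prod>i\<in>I. emeasure (M i) (A i))"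
proof -
  have "prod_emb I M I (PiE I A) = PiE I A"
    using assms(3) by (intro prod_emb_PiE_same_index) (auto dest: sets.sets_into_space)
  then show ?thesis using emeasure_PiM_emb[of I M I A] assms by simp
qed

lemma couple:
  fixes M M' :: "nat \<Rightarrow> 'a::metric_space measure" and \<delta> :: real
  assumes I: "finite I"
    and P: "\<And>i. i \<in> I \<Longrightarrow> prob_space (M i)" and P': "\<And>i. i \<in> I \<Longrightarrow> prob_space (M' i)"
    and sM: "\<And>i. sets (M i) = sets borel" and sM': "\<And>i. sets (M' i) = sets borel"
    and C: "C \<in> sets borel"
    and eqC: "\<And>i A. i \<in> I \<Longrightarrow> A \<in> sets borel \<Longrightarrow> emeasure (M i) (A \<inter> C) = emeasure (M' i) (A \<inter> C)"
    and mC: "\<And>i. i \<in> I \<Longrightarrow> 1 - \<delta> \<le> measure (M i) C" and d: "0 \<le> \<delta>" "\<delta> \<le> 1"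
    and E: "E \<in> sets (PiM I (\<lambda>_. borel))"
  shows "\<bar>measure (PiM I M) E - measure (PiM I M') E\<bar> \<le> card I * \<delta>"
proof -
  define B where "B = PiE I (\<lambda>_. C)"
  have sP: "sets (PiM I M) = sets (PiM I (\<lambda>_. borel))" "sets (PiM I M') = sets (PiM I (\<lambda>_. borel))"
    using sM sM' by (auto intro!: sets_PiM_cong)
  have spP: "space (PiM I M) = space (PiM I (\<lambda>_. borel))" "space (PiM I M') = space (PiM I (\<lambda>_. borel))"
    using sets_eq_imp_space_eq[OF sP(1)] sets_eq_imp_space_eq[OF sP(2)] by auto
  have Bs: "B \<in> sets (PiM I (\<lambda>_. borel))" unfolding B_def using I C by (intro sets_PiM_I_finite) auto
  have pP: "prob_space (PiM I M)" "prob_space (PiM I M')" using P P' by (auto intro!: prob_space_PiM)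
  interpret pP: prob_space "PiM I M" by (rule pP(1))
  interpret pP': prob_space "PiM I M'" by (rule pP(2))
  have gen: "emeasure (PiM I M) (B \<inter> PiE I A) = emeasure (PiM I M') (B \<inter> PiE I A)"
    if A: "\<And>i. i \<in> I \<Longrightarrow> A i \<in> sets (borel :: 'a measure)" for A
  proof -
    have BA: "B \<inter> PiE I A = PiE I (\<lambda>i. A i \<inter> C)" unfolding B_def by (auto simp: PiE_iff)
    have "emeasure (PiM I M) (B \<inter> PiE I A) = (\<Prod>i\<in>I. emeasure (M i) (A i \<inter> C))"
      unfolding BA using I P A C sM by (intro emeasure_PiM_fin) auto
    also have "\<dots> = (\<Prod>i\<in>I. emeasure (M' i) (A i \<inter> C))"
      using eqC A by (intro prod.cong) auto
    also have "\<dots> = emeasure (PiM I M') (B \<inter> PiE I A)"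
      unfolding BA using I P' A C sM' by (intro emeasure_PiM_fin[symmetric]) auto
    finally show ?thesis .
  qed
  have dens: "density (PiM I M) (indicator B) = density (PiM I M') (indicator B)"
  proof (rule measure_eqI_PiM_finite[where M="\<lambda>_. borel" and A="\<lambda>_. PiE I (\<lambda>_. UNIV)"])
    show "finite I" by fact
    show "sets (density (PiM I M) (indicator B)) = sets (PiM I (\<lambda>_. borel))" using sP by simp
    show "sets (density (PiM I M') (indicator B)) = sets (PiM I (\<lambda>_. borel))" using sP by simp
    fix A assume A: "\<And>i. i \<in> I \<Longrightarrow> A i \<in> sets (borel :: 'a measure)"
    have PA: "PiE I A \<in> sets (PiM I (\<lambda>_. borel))" using I A by (intro sets_PiM_I_finite) auto
    show "emeasure (density (PiM I M) (indicator B)) (PiE I A) = emeasure (density (PiM I M') (indicator B)) (PiE I A)"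
      using gen[OF A] Bs PA sP by (simp add: emeasure_restricted)
  next
    show "range (\<lambda>_::nat. PiE I (\<lambda>_. UNIV :: 'a set)) \<subseteq> prod_algebra I (\<lambda>_. borel)"
      using space_in_prod_algebra[of I "\<lambda>_. borel :: 'a measure"] by auto
    show "(\<Union>i::nat. PiE I (\<lambda>_. UNIV :: 'a set)) = space (PiM I (\<lambda>_. borel))" by (simp add: space_PiM)
    show "emeasure (density (PiM I M) (indicator B)) (PiE I (\<lambda>_. UNIV)) \<noteq> \<infinity>" for i::nat
    proof -
      have "PiE I (\<lambda>_. UNIV :: 'a set) \<in> sets (PiM I M)"
        using sets.top[of "PiM I M"] spP(1) by (simp add: space_PiM)
      then show ?thesis using Bs sP by (simp add: emeasure_restricted)
    qed
  qed
  have EB: "measure (PiM I M) (B \<inter> E) = measure (PiM I M') (B \<inter> E)"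
  proof -
    have "emeasure (density (PiM I M) (indicator B)) E = emeasure (density (PiM I M') (indicator B)) E"
      by (simp add: dens)
    then have "emeasure (PiM I M) (B \<inter> E) = emeasure (PiM I M') (B \<inter> E)"
      using Bs E sP by (simp add: emeasure_restricted)
    then show ?thesis by (simp add: measure_def)
  qed
  have prodC: "(\<Prod>i\<in>I. measure (M i) C) = measure (PiM I M) B"
  proof -
    have "emeasure (PiM I M) B = (\<Prod>i\<in>I. emeasure (M i) C)"
      unfolding B_def using I P C sM by (intro emeasure_PiM_fin) auto
    also have "\<dots> = (\<Prod>i\<in>I. ennreal (measure (M i) C))"
      using P by (intro prod.cong refl) (auto simp: prob_space_def finite_measure.emeasure_eq_measure)
    also have "\<dots> = ennreal (\<Prod>i\<in>I. measure (M i) C)"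
      by (rule prod_ennreal) simp
    finally show ?thesis by (simp add: measure_def prod_nonneg)
  qed
  have prodC': "(\<Prod>i\<in>I. measure (M i) C) = measure (PiM I M') B"
  proof -
    have "emeasure (PiM I M') B = (\<Prod>i\<in>I. emeasure (M' i) C)"
      unfolding B_def using I P' C sM' by (intro emeasure_PiM_fin) auto
    also have "\<dots> = (\<Prod>i\<in>I. emeasure (M i) C)"
      using eqC[of _ UNIV] by (intro prod.cong) auto
    also have "\<dots> = (\<Prod>i\<in>I. ennreal (measure (M i) C))"
      using P by (intro prod.cong refl) (auto simp: prob_space_def finite_measure.emeasure_eq_measure)
    also have "\<dots> = ennreal (\<Prod>i\<in>I. measure (M i) C)"
      by (rule prod_ennreal) simp
    finally show ?thesis by (simp add: measure_def prod_nonneg)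
  qed
  have "(1 - \<delta>) ^ card I \<le> (\<Prod>i\<in>I. measure (M i) C)"
    using prod_mono[of I "\<lambda>_. 1 - \<delta>" "\<lambda>i. measure (M i) C"] mC d by simp
  moreover have "1 - card I * \<delta> \<le> (1 - \<delta>) ^ card I"
    using Bernoulli_inequality[of "-\<delta>" "card I"] d by simp
  ultimately have Bb: "1 - card I * \<delta> \<le> measure (PiM I M) B" "1 - card I * \<delta> \<le> measure (PiM I M') B"
    using prodC prodC' by linarith+
  have "measure (PiM I M) (E - B) \<le> measure (PiM I M) (space (PiM I M) - B)"
    using E Bs sP spP by (intro pP.finite_measure_mono) (auto dest: sets.sets_into_space)
  also have "\<dots> = 1 - measure (PiM I M) B" using Bs sP by (simp add: pP.prob_compl)
  finally have d1: "measure (PiM I M) (E - B) \<le> card I * \<delta>" using Bb by linarith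
  have "measure (PiM I M') (E - B) \<le> measure (PiM I M') (space (PiM I M') - B)"
    using E Bs sP spP by (intro pP'.finite_measure_mono) (auto dest: sets.sets_into_space)
  also have "\<dots> = 1 - measure (PiM I M') B" using Bs sP by (simp add: pP'.prob_compl)
  finally have d2: "measure (PiM I M') (E - B) \<le> card I * \<delta>" using Bb by linarith
  have s1: "measure (PiM I M) E = measure (PiM I M) (B \<inter> E) + measure (PiM I M) (E - B)"
    using E Bs sP by (simp add: pP.finite_measure_Diff' Int_commute)
  have s2: "measure (PiM I M') E = measure (PiM I M') (B \<inter> E) + measure (PiM I M') (E - B)"
    using E Bs sP by (simp add: pP'.finite_measure_Diff' Int_commute)
  show ?thesis using s1 s2 EB d1 d2 measure_nonneg[of "PiM I M" "E - B"] measure_nonneg[of "PiM I M'" "E - B"]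
    by linarith
qed




lemma excess_bdd:
  assumes "0 \<le> w" "w \<le> 1"
  shows "bdd_above ((\<lambda>(PX, PY). prob_output n w PX PY PX \<phi> True + prob_output n w PX PY PY \<phi> False - 1 + tv_dist PX PY) ` model_class Y C \<beta> \<kappa>)"
proof (rule bdd_aboveI[where M=2])
  fix x assume "x \<in> (\<lambda>(PX, PY). prob_output n w PX PY PX \<phi> True + prob_output n w PX PY PY \<phi> False - 1 + tv_dist PX PY) ` model_class Y C \<beta> \<kappa>"
  then obtain PX PY where P: "borel_prob PX" "borel_prob PY" and x: "x = prob_output n w PX PY PX \<phi> True + prob_output n w PX PY PY \<phi> False - 1 + tv_dist PX PY"
    by (auto simp: model_class_def)
  show "x \<le> 2" using prob_output_bounds[OF P P(1) assms, of n \<phi> True] prob_output_bounds[OF P P(2) assms, of n \<phi> False]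
      tv_le1[OF P] x by linarith
qed

lemma sum_sg_aux:
  fixes \<sigma> :: "nat \<Rightarrow> bool"
  shows "(\<Sum>i<2*k. (if even i = \<sigma> (i div 2) then 1 else -1 :: real)) = 0"
proof (induction k)
  case (Suc k)
  have e: "{..<2 * Suc k} = insert (2*k+1) (insert (2*k) {..<2*k})" by auto
  show ?case unfolding e using Suc by simp
qed simp

locale constr =
  fixes y0 z0 :: "'a::polish_space" and c :: "nat \<Rightarrow> 'a" and K :: nat and H h :: real
  assumes K: "0 < K" and cinj: "inj_on c {..<2*K}" and yz: "y0 \<noteq> z0"
    and y0c: "y0 \<notin> c ` {..<2*K}" and z0c: "z0 \<notin> c ` {..<2*K}"
    and hH: "0 < h" "h \<le> H" "H \<le> 1/4"
begin

definition "S = {y0, z0} \<union> c ` {..<2*K}"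
definition "mu = 1 / (4 * real K)"
definition sgf :: "(nat \<Rightarrow> bool) \<Rightarrow> nat \<Rightarrow> real" where
  "sgf \<sigma> i = (if even i = \<sigma> (i div 2) then 1 else -1)"
definition mass :: "real \<Rightarrow> (nat \<Rightarrow> bool) \<Rightarrow> 'a \<Rightarrow> real" where
  "mass e \<sigma> x = (if x = y0 then (1/2 + e*H)/2 else if x = z0 then (1/2 - e*H)/2
     else if x \<in> c ` {..<2*K} then mu * (1 + e*2*h* sgf \<sigma> (inv_into {..<2*K} c x)) else 0)"

definition "flip k \<sigma> = \<sigma>(k := \<not> \<sigma> k)"

lemma finS: "finite S" by (simp add: S_def)

lemma mu_pos: "mu > 0" using K by (simp add: mu_def)

lemma mass_y0: "mass e \<sigma> y0 = (1/2 + e*H)/2" by (simp add: mass_def)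
lemma mass_z0: "mass e \<sigma> z0 = (1/2 - e*H)/2" using yz by (simp add: mass_def)
lemma mass_c: "i < 2*K \<Longrightarrow> mass e \<sigma> (c i) = mu * (1 + e*2*h* sgf \<sigma> i)"
  using y0c z0c cinj by (auto simp: mass_def inv_into_f_f)

lemma sg_abs: "\<bar>sgf \<sigma> i\<bar> = 1" by (simp add: sgf_def)

lemma sg_pair: "sgf \<sigma> (2*k) = (if \<sigma> k then 1 else -1)" "sgf \<sigma> (2*k+1) = (if \<sigma> k then -1 else 1)"
  by (auto simp: sgf_def)

lemma mass_pos:
  assumes "e = 1 \<or> e = -1" "x \<in> S"
  shows "mass e \<sigma> x > 0"
proof -
  have b: "\<bar>e*2*h* sgf \<sigma> i\<bar> \<le> 1/2" for i
    using assms(1) hH sg_abs[of \<sigma> i] by (auto simp: abs_mult)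
  have "1 + e*2*h* sgf \<sigma> i > 0" for i using b[of i] unfolding abs_le_iff by linarith
  then show ?thesis using assms hH mu_pos
    by (auto simp: S_def mass_y0 mass_z0 mass_c)
qed

lemma sum_cells: "(\<Sum>x\<in>c ` {..<2*K}. mass e \<sigma> x) = 1/2"
proof -
  have "(\<Sum>x\<in>c ` {..<2*K}. mass e \<sigma> x) = (\<Sum>i<2*K. mu * (1 + e*2*h* sgf \<sigma> i))"
    using cinj by (simp add: sum.reindex mass_c)
  also have "\<dots> = (\<Sum>i<2*K. mu) + mu*e*2*h*(\<Sum>i<2*K. sgf \<sigma> i)"
    by (simp add: sum.distrib sum_distrib_left algebra_simps)
  also have "(\<Sum>i<2*K. sgf \<sigma> i) = 0" unfolding sgf_def by (rule sum_sg_aux)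
  finally show ?thesis using K by (simp add: mu_def)
qed

lemma sum_mass: "(\<Sum>x\<in>S. mass e \<sigma> x) = 1"
proof -
  have "(\<Sum>x\<in>S. mass e \<sigma> x) = mass e \<sigma> y0 + (mass e \<sigma> z0 + (\<Sum>x\<in>c ` {..<2*K}. mass e \<sigma> x))"
    unfolding S_def using yz y0c z0c by (simp add: sum.insert)
  from this[unfolded sum_cells mass_y0 mass_z0] show ?thesis by (simp add: field_simps)
qed

abbreviation "PX \<sigma> \<equiv> disc S (mass 1 \<sigma>)"
abbreviation "PY \<sigma> \<equiv> disc S (mass (-1) \<sigma>)"

lemma PX_prob: "borel_prob (PX \<sigma>)"
  using mass_pos[of 1] by (intro prob_disc finS sum_mass) (auto intro: less_imp_le)
lemma PY_prob: "borel_prob (PY \<sigma>)"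
  using mass_pos[of "-1"] by (intro prob_disc finS sum_mass) (auto intro: less_imp_le)

lemma ratio_y0: "mass 1 \<sigma> y0 / (mass 1 \<sigma> y0 + mass (-1) \<sigma> y0) = 1/2 + H"
  by (simp add: mass_y0 field_simps)
lemma ratio_z0: "mass 1 \<sigma> z0 / (mass 1 \<sigma> z0 + mass (-1) \<sigma> z0) = 1/2 - H"
  by (simp add: mass_z0 field_simps)
lemma ratio_c: "i < 2*K \<Longrightarrow> mass 1 \<sigma> (c i) / (mass 1 \<sigma> (c i) + mass (-1) \<sigma> (c i)) = 1/2 + h * sgf \<sigma> i"
  using mu_pos by (simp add: mass_c field_simps)

end

locale constr_geo = constr +
  fixes Y :: "'a set" and C \<beta> :: real
  assumes SY: "S \<subseteq> Y" and Yb: "Y \<in> sets borel"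
    and hcc: "\<And>i j. i < 2*K \<Longrightarrow> j < 2*K \<Longrightarrow> i \<noteq> j \<Longrightarrow> 2*h \<le> C * dist (c i) (c j) powr \<beta>"
    and hcy: "\<And>i. i < 2*K \<Longrightarrow> 2*H \<le> C * dist (c i) y0 powr \<beta>"
    and hcz: "\<And>i. i < 2*K \<Longrightarrow> 2*H \<le> C * dist (c i) z0 powr \<beta>"
    and hyz: "2*H \<le> C * dist y0 z0 powr \<beta>"
begin

lemma in_class:
  assumes "\<kappa> \<le> H"
  shows "(PX \<sigma>, PY \<sigma>) \<in> model_class Y C \<beta> \<kappa>"
proof -
  have nn1: "\<And>x. x \<in> S \<Longrightarrow> 0 \<le> mass 1 \<sigma> x" and nn2: "\<And>x. x \<in> S \<Longrightarrow> 0 \<le> mass (-1) \<sigma> x"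
    using mass_pos by (auto intro: less_imp_le)
  have SYi: "S \<inter> Y = S" using SY by auto
  have mY1: "measure (PX \<sigma>) Y = 1" using measure_disc[OF finS Yb nn1] by (simp add: SYi sum_mass)
  have mY2: "measure (PY \<sigma>) Y = 1" using measure_disc[OF finS Yb nn2] by (simp add: SYi sum_mass)
  have "H \<le> (\<Sum>x\<in>S. max 0 (mass 1 \<sigma> x - mass (-1) \<sigma> x))"
  proof -
    have "H = max 0 (mass 1 \<sigma> y0 - mass (-1) \<sigma> y0)" unfolding mass_y0 using hH by (simp add: max_def field_simps)
    also have "\<dots> \<le> (\<Sum>x\<in>S. max 0 (mass 1 \<sigma> x - mass (-1) \<sigma> x))"
      by (rule member_le_sum) (auto simp: S_def finS)
    finally show ?thesis .
  qed
  then have tv: "\<kappa> \<le> tv_dist (PX \<sigma>) (PY \<sigma>)"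
    using tv_disc[OF finS nn1 nn2 PX_prob PY_prob] assms by linarith
  have Sb: "S \<in> sets borel" using finS by (rule finite_borel)
  have m2: "measure (measure_add (PX \<sigma>) (PY \<sigma>)) S = 2"
  proof -
    have "measure (measure_add (PX \<sigma>) (PY \<sigma>)) S = measure (disc S (\<lambda>x. mass 1 \<sigma> x + mass (-1) \<sigma> x)) S"
      by (simp add: measure_add_disc[OF finS nn1 nn2])
    also have "\<dots> = (\<Sum>x\<in>S. mass 1 \<sigma> x + mass (-1) \<sigma> x)"
      using measure_disc[OF finS Sb] nn1 nn2 by (simp add: add_nonneg_nonneg)
    finally show ?thesis by (simp add: sum.distrib sum_mass)
  qed
  define r where "r x = mass 1 \<sigma> x / (mass 1 \<sigma> x + mass (-1) \<sigma> x)" for x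
  have RN: "enn2real (RN_deriv (measure_add (PX \<sigma>) (PY \<sigma>)) (PX \<sigma>) x) = r x" if "x \<in> S" for x
  proof -
    have "RN_deriv (measure_add (PX \<sigma>) (PY \<sigma>)) (PX \<sigma>) x = ennreal (r x)"
      unfolding r_def using that mass_pos[of 1] mass_pos[of "-1"] nn1 nn2
      by (intro RN_disc finS) (auto intro: add_pos_pos)
    moreover have "r x \<ge> 0" unfolding r_def using that nn1 nn2 by simp
    ultimately show ?thesis by simp
  qed
  have hold: "\<bar>r y - r z\<bar> \<le> C * dist y z powr \<beta>" if y: "y \<in> S" and z: "z \<in> S" for y z
  proof (cases "y = z")
    case True then show ?thesis by simp
  next
    case False
    have ry0: "r y0 = 1/2 + H" unfolding r_def by (rule ratio_y0)
    have rz0: "r z0 = 1/2 - H" unfolding r_def by (rule ratio_z0)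
    have rc: "r (c i) = 1/2 + h * sgf \<sigma> i" if "i < 2*K" for i unfolding r_def using that by (rule ratio_c)
    have hs: "\<bar>h * sgf \<sigma> i\<bar> = h" for i using hH sg_abs[of \<sigma> i] by (simp add: abs_mult)
    have hs2: "\<bar>h * sgf \<sigma> i - h * sgf \<sigma> j\<bar> \<le> 2*h" for i j using hs[of i] hs[of j] by linarith
    have hy: "\<bar>r (c i) - r y0\<bar> \<le> C * dist (c i) y0 powr \<beta>" if "i < 2*K" for i
      using rc[OF that] ry0 hcy[OF that] hs[of i] hH unfolding abs_le_iff by linarith
    have hz: "\<bar>r (c i) - r z0\<bar> \<le> C * dist (c i) z0 powr \<beta>" if "i < 2*K" for i
      using rc[OF that] rz0 hcz[OF that] hs[of i] hH unfolding abs_le_iff by linarith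
    have hyz': "\<bar>r y0 - r z0\<bar> \<le> C * dist y0 z0 powr \<beta>"
      using ry0 rz0 hyz hH by simp
    have hcc': "\<bar>r (c i) - r (c j)\<bar> \<le> C * dist (c i) (c j) powr \<beta>" if "i < 2*K" "j < 2*K" "i \<noteq> j" for i j
      using rc[OF that(1)] rc[OF that(2)] hcc[OF that] hs2[of i j] by simp
    consider "y = y0" "z = z0" | "y = z0" "z = y0" | i where "i < 2*K" "y = c i" "z = y0"
      | i where "i < 2*K" "y = c i" "z = z0" | i where "i < 2*K" "z = c i" "y = y0"
      | i where "i < 2*K" "z = c i" "y = z0" | i j where "i < 2*K" "j < 2*K" "y = c i" "z = c j" "i \<noteq> j"
      using y z False by (auto simp: S_def) metis
    then show ?thesis
    proof cases
      case 1 then show ?thesis using hyz' by simp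
    next
      case 2 then show ?thesis using hyz' by (simp add: dist_commute abs_minus_commute)
    next
      case 3 then show ?thesis using hy by simp
    next
      case 4 then show ?thesis using hz by simp
    next
      case 5 then show ?thesis using hy[of i] by (simp add: dist_commute abs_minus_commute)
    next
      case 6 then show ?thesis using hz[of i] by (simp add: dist_commute abs_minus_commute)
    next
      case 7 then show ?thesis using hcc' by simp
    qed
  qed
  show ?thesis unfolding model_class_def
    using PX_prob PY_prob mY1 mY2 tv Sb SY m2 hold RN
    by (auto intro!: bexI[of _ S])
qed

end




context constr
begin

definition "Mw n \<sigma> ws = PiM {..<n} (\<lambda>j. if ws j then PY \<sigma> else PX \<sigma>)"
definition "Q n \<phi> \<sigma> ws x = measure (Mw n \<sigma> ws) {zs \<in> space (Mw n \<sigma> ws). \<phi> zs ws x}"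
definition "err n \<phi> \<sigma> ws k = (if \<sigma> k then Q n \<phi> \<sigma> ws (c (2*k)) else 1 - Q n \<phi> \<sigma> ws (c (2*k)))"
definition "Exs n w \<phi> \<sigma> = prob_output n w (PX \<sigma>) (PY \<sigma>) (PX \<sigma>) \<phi> True
    + prob_output n w (PX \<sigma>) (PY \<sigma>) (PY \<sigma>) \<phi> False - 1 + tv_dist (PX \<sigma>) (PY \<sigma>)"

abbreviation "wt w n ws \<equiv> w ^ card {j\<in>{..<n}. ws j} * (1 - w) ^ card {j\<in>{..<n}. \<not> ws j}"
abbreviation "WS n \<equiv> PiE {..<n} (\<lambda>_. UNIV :: bool set)"

lemma Mw_prob: "prob_space (Mw n \<sigma> ws)"
  unfolding Mw_def using PX_prob PY_prob by (rule prob_space_Mws)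

lemma Mw_sets: "\<And>j. sets (if ws j then PY \<sigma> else PX \<sigma>) = sets borel" by simp

lemma Q_bounds: "0 \<le> Q n \<phi> \<sigma> ws x" "Q n \<phi> \<sigma> ws x \<le> 1"
  unfolding Q_def using prob_space.prob_le_1[OF Mw_prob] by (auto simp: measure_nonneg)

lemma Q_compl:
  assumes cl: "is_classifier n \<phi>" and ws: "ws \<in> WS n"
  shows "measure (Mw n \<sigma> ws) {zs \<in> space (Mw n \<sigma> ws). \<phi> zs ws x = False} = 1 - Q n \<phi> \<sigma> ws x"
proof -
  interpret p: prob_space "Mw n \<sigma> ws" by (rule Mw_prob)
  have m: "{zs \<in> space (Mw n \<sigma> ws). \<phi> zs ws x = True} \<in> sets (Mw n \<sigma> ws)"
    unfolding Mw_def by (rule section_meas1[OF cl ws Mw_sets])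
  have "{zs \<in> space (Mw n \<sigma> ws). \<phi> zs ws x = False} = space (Mw n \<sigma> ws) - {zs \<in> space (Mw n \<sigma> ws). \<phi> zs ws x = True}"
    by auto
  then show ?thesis using p.prob_compl[OF m] by (simp add: Q_def)
qed

lemma step1:
  assumes cl: "is_classifier n \<phi>" and w: "0 < w" "w < 1"
  shows "(\<Sum>ws\<in>WS n. wt w n ws * (\<Sum>k<K. 4*mu*h * err n \<phi> \<sigma> ws k)) \<le> Exs n w \<phi> \<sigma>"
proof -
  define a where "a = mass 1 \<sigma>"
  define b where "b = mass (-1) \<sigma>"
  have a0: "\<And>x. x \<in> S \<Longrightarrow> 0 \<le> a x" and b0: "\<And>x. x \<in> S \<Longrightarrow> 0 \<le> b x"
    unfolding a_def b_def using mass_pos by (auto intro: less_imp_le)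
  have p1: "prob_output n w (PX \<sigma>) (PY \<sigma>) (PX \<sigma>) \<phi> True = (\<Sum>ws\<in>WS n. wt w n ws * (\<Sum>x\<in>S. a x * Q n \<phi> \<sigma> ws x))"
    unfolding a_def by (subst prob_output_disc[OF cl PX_prob PY_prob finS]) (auto intro: less_imp_le mass_pos simp: Q_def Mw_def)
  have p2: "prob_output n w (PX \<sigma>) (PY \<sigma>) (PY \<sigma>) \<phi> False = (\<Sum>ws\<in>WS n. wt w n ws * (\<Sum>x\<in>S. b x * (1 - Q n \<phi> \<sigma> ws x)))"
    unfolding b_def
  proof (subst prob_output_disc[OF cl PX_prob PY_prob finS])
    show "\<And>x. x \<in> S \<Longrightarrow> 0 \<le> mass (- 1) \<sigma> x" using mass_pos by (auto intro: less_imp_le)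
    show "(\<Sum>ws\<in>WS n. wt w n ws * (\<Sum>x\<in>S. mass (- 1) \<sigma> x * measure (PiM {..<n} (\<lambda>j. if ws j then PY \<sigma> else PX \<sigma>))
            {zs \<in> space (PiM {..<n} (\<lambda>j. if ws j then PY \<sigma> else PX \<sigma>)). \<phi> zs ws x = False})) =
        (\<Sum>ws\<in>WS n. wt w n ws * (\<Sum>x\<in>S. mass (- 1) \<sigma> x * (1 - Q n \<phi> \<sigma> ws x)))"
      using Q_compl[OF cl] by (intro sum.cong refl) (simp add: Mw_def)
  qed
  have tv: "(\<Sum>x\<in>S. max 0 (a x - b x)) \<le> tv_dist (PX \<sigma>) (PY \<sigma>)"
    unfolding a_def b_def using a0 b0 unfolding a_def b_def by (intro tv_disc finS PX_prob PY_prob)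
  define g where "g ws x = a x * Q n \<phi> \<sigma> ws x + b x * (1 - Q n \<phi> \<sigma> ws x) + max 0 (a x - b x) - a x" for ws x
  have suma: "(\<Sum>x\<in>S. a x) = 1" unfolding a_def by (rule sum_mass)
  have G: "(\<Sum>x\<in>S. g ws x) = (\<Sum>x\<in>S. a x * Q n \<phi> \<sigma> ws x) + (\<Sum>x\<in>S. b x * (1 - Q n \<phi> \<sigma> ws x)) + ((\<Sum>x\<in>S. max 0 (a x - b x)) - 1)" for ws
    unfolding g_def by (simp add: sum.distrib sum_subtractf suma)
  have wsum: "(\<Sum>ws\<in>WS n. wt w n ws) = 1" by (rule weights_sum)
  have "(\<Sum>ws\<in>WS n. wt w n ws * (\<Sum>x\<in>S. g ws x)) =
      (\<Sum>ws\<in>WS n. wt w n ws * (\<Sum>x\<in>S. a x * Q n \<phi> \<sigma> ws x)) + (\<Sum>ws\<in>WS n. wt w n ws * (\<Sum>x\<in>S. b x * (1 - Q n \<phi> \<sigma> ws x)))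
      + (\<Sum>ws\<in>WS n. wt w n ws) * ((\<Sum>x\<in>S. max 0 (a x - b x)) - 1)"
    unfolding G by (simp add: distrib_left sum.distrib sum_distrib_right)
  also have "\<dots> \<le> Exs n w \<phi> \<sigma>" unfolding Exs_def p1 p2 wsum using tv by simp
  finally have main: "(\<Sum>ws\<in>WS n. wt w n ws * (\<Sum>x\<in>S. g ws x)) \<le> Exs n w \<phi> \<sigma>" .
  have gnn: "0 \<le> g ws x" if "x \<in> S" for ws x
  proof -
    have "g ws x = (if b x \<le> a x then (a x - b x) * Q n \<phi> \<sigma> ws x else (b x - a x) * (1 - Q n \<phi> \<sigma> ws x))"
      unfolding g_def by (simp add: max_def algebra_simps)
    then show ?thesis using Q_bounds[of n \<phi> \<sigma> ws x] by simp
  qed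
  have gc: "g ws (c (2*k)) = 4*mu*h * err n \<phi> \<sigma> ws k" if "k < K" for ws k
  proof -
    have k2: "2*k < 2*K" using that by simp
    have ea: "a (c (2*k)) = mu * (1 + 2*h* sgf \<sigma> (2*k))" and eb: "b (c (2*k)) = mu * (1 - 2*h* sgf \<sigma> (2*k))"
      unfolding a_def b_def using mass_c[OF k2] by auto
    have mh: "mu * h > 0" using mu_pos hH by simp
    show ?thesis
    proof (cases "\<sigma> k")
      case True
      then have "max 0 (a (c (2*k)) - b (c (2*k))) = 4*mu*h" unfolding ea eb sg_pair using mh
        by (simp add: max_def algebra_simps)
      then show ?thesis using True unfolding g_def err_def ea eb sg_pair by (simp add: algebra_simps)
    next
      case False
      then have "max 0 (a (c (2*k)) - b (c (2*k))) = 0" unfolding ea eb sg_pair using mh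
        by (simp add: max_def algebra_simps)
      then show ?thesis using False unfolding g_def err_def ea eb sg_pair by (simp add: algebra_simps)
    qed
  qed
  have injc: "inj_on (\<lambda>k. c (2*k)) {..<K}"
  proof (rule inj_onI)
    fix x y assume "x \<in> {..<K}" "y \<in> {..<K}" "c (2*x) = c (2*y)"
    then have "2*x = 2*y" using inj_onD[OF cinj, of "2*x" "2*y"] by auto
    then show "x = y" by simp
  qed
  have sub: "(\<lambda>k. c (2*k)) ` {..<K} \<subseteq> S" by (auto simp: S_def)
  have "(\<Sum>k<K. 4*mu*h * err n \<phi> \<sigma> ws k) \<le> (\<Sum>x\<in>S. g ws x)" for ws
  proof -
    have "(\<Sum>k<K. 4*mu*h * err n \<phi> \<sigma> ws k) = (\<Sum>k<K. g ws (c (2*k)))" using gc by simp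
    also have "\<dots> = (\<Sum>x\<in>(\<lambda>k. c (2*k)) ` {..<K}. g ws x)" by (simp add: sum.reindex[OF injc])
    also have "\<dots> \<le> (\<Sum>x\<in>S. g ws x)" using sub gnn finS by (intro sum_mono2) auto
    finally show ?thesis .
  qed
  then have "(\<Sum>ws\<in>WS n. wt w n ws * (\<Sum>k<K. 4*mu*h * err n \<phi> \<sigma> ws k)) \<le> (\<Sum>ws\<in>WS n. wt w n ws * (\<Sum>x\<in>S. g ws x))"
    using w by (intro sum_mono mult_left_mono) auto
  with main show ?thesis by linarith
qed

end




context constr
begin

lemma mass_flip:
  assumes k: "k < K" and x: "x \<noteq> c (2*k)" "x \<noteq> c (2*k+1)"
  shows "mass e (flip k \<sigma>) x = mass e \<sigma> x"
proof (cases "x \<in> c ` {..<2*K}")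
  case True
  then obtain i where i: "i < 2*K" "x = c i" by auto
  have "i \<noteq> 2*k" "i \<noteq> 2*k+1" using i x by auto
  then have "i div 2 \<noteq> k" by auto
  then have "sgf (flip k \<sigma>) i = sgf \<sigma> i" by (simp add: sgf_def flip_def)
  then show ?thesis using i by (simp add: mass_c)
qed (auto simp: mass_def)

lemma pair_mass:
  assumes k: "k < K" and that: "e = 1 \<or> e = -1"
  shows "measure (disc S (mass e \<sigma>)) (UNIV - {c (2*k), c (2*k+1)}) \<ge> 1 - 2*mu"
proof -
  have k2: "2*k < 2*K" "2*k+1 < 2*K" using k by auto
  have ne: "c (2*k) \<noteq> c (2*k+1)" using inj_onD[OF cinj, of "2*k" "2*k+1"] k2 by auto
  have inS: "{c (2*k), c (2*k+1)} \<subseteq> S" using k2 by (auto simp: S_def)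
  have nn: "\<And>x. x \<in> S \<Longrightarrow> 0 \<le> mass e \<sigma> x" using mass_pos[OF that] by (auto intro: less_imp_le)
  have Cb: "UNIV - {c (2*k), c (2*k+1)} \<in> sets borel" by (intro borel_open) auto
  have "measure (disc S (mass e \<sigma>)) (UNIV - {c (2*k), c (2*k+1)}) = (\<Sum>x\<in>S - {c (2*k), c (2*k+1)}. mass e \<sigma> x)"
    using measure_disc[OF finS Cb nn] by (simp add: Diff_eq)
  also have "\<dots> = (\<Sum>x\<in>S. mass e \<sigma> x) - (\<Sum>x\<in>{c (2*k), c (2*k+1)}. mass e \<sigma> x)"
    using finS inS by (rule sum_diff)
  also have "(\<Sum>x\<in>{c (2*k), c (2*k+1)}. mass e \<sigma> x) = 2*mu"
  proof -
    have s0: "sgf \<sigma> (2*k) + sgf \<sigma> (2*k+1) = 0" unfolding sgf_def by auto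
    have "(\<Sum>x\<in>{c (2*k), c (2*k+1)}. mass e \<sigma> x) = mass e \<sigma> (c (2*k)) + mass e \<sigma> (c (2*k+1))"
      using ne by simp
    also have "\<dots> = mu*(1 + e*2*h* sgf \<sigma> (2*k)) + mu*(1 + e*2*h* sgf \<sigma> (2*k+1))"
      using mass_c[OF k2(1)] mass_c[OF k2(2)] by simp
    also have "\<dots> = 2*mu + 2*mu*e*h*(sgf \<sigma> (2*k) + sgf \<sigma> (2*k+1))" by (simp add: algebra_simps)
    finally show ?thesis using s0 by simp
  qed
  finally show ?thesis by (simp add: sum_mass)
qed

lemma Q_close:
  assumes cl: "is_classifier n \<phi>" and ws: "ws \<in> WS n" and k: "k < K" and nK: "2*n \<le> K"
  shows "\<bar>Q n \<phi> \<sigma> ws x - Q n \<phi> (flip k \<sigma>) ws x\<bar> \<le> 1/4"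
proof -
  define M where "M = (\<lambda>j. if ws j then PY \<sigma> else PX \<sigma>)"
  define M' where "M' = (\<lambda>j. if ws j then PY (flip k \<sigma>) else PX (flip k \<sigma>))"
  define E where "E = {zs \<in> space (PiM {..<n} M). \<phi> zs ws x}"
  have sM: "\<And>j. sets (M j) = sets borel" "\<And>j. sets (M' j) = sets borel" by (auto simp: M_def M'_def)
  have Em: "E \<in> sets (PiM {..<n} (\<lambda>_. borel))"
  proof -
    have "{zs \<in> space (PiM {..<n} M). \<phi> zs ws x = True} \<in> sets (PiM {..<n} M)"
      by (rule section_meas1[OF cl ws sM(1)])
    moreover have "sets (PiM {..<n} M) = sets (PiM {..<n} (\<lambda>_. borel))" by (rule sets_PiM_borel) (rule sM(1))
    ultimately show ?thesis by (simp add: E_def)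
  qed
  have "\<And>j. space (M j) = UNIV" "\<And>j. space (M' j) = UNIV" by (auto simp: M_def M'_def)
  then have spE: "space (PiM {..<n} M') = space (PiM {..<n} M)" by (simp add: space_PiM)
  have "\<bar>measure (PiM {..<n} M) E - measure (PiM {..<n} M') E\<bar> \<le> card {..<n} * (2*mu)"
  proof (rule couple)
    show "finite {..<n}" by simp
    show "prob_space (M i)" "prob_space (M' i)" for i
      using PX_prob PY_prob by (auto simp: M_def M'_def borel_prob_def)
    show "sets (M i) = sets borel" "sets (M' i) = sets borel" for i using sM by auto
    show "UNIV - {c (2*k), c (2*k+1)} \<in> sets borel" by (intro borel_open) auto
    show "emeasure (M i) (A \<inter> (UNIV - {c (2*k), c (2*k+1)})) = emeasure (M' i) (A \<inter> (UNIV - {c (2*k), c (2*k+1)}))"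
      if "A \<in> sets borel" for i A
    proof -
      have "UNIV - {c (2*k), c (2*k+1)} \<in> sets borel" by (intro borel_open) auto
      with that have Ab: "A \<inter> (UNIV - {c (2*k), c (2*k+1)}) \<in> sets borel" by (rule sets.Int)
      have "(\<Sum>x\<in>S \<inter> (A \<inter> (UNIV - {c (2*k), c (2*k+1)})). ennreal (mass e \<sigma> x)) =
            (\<Sum>x\<in>S \<inter> (A \<inter> (UNIV - {c (2*k), c (2*k+1)})). ennreal (mass e (flip k \<sigma>) x))" for e
        using mass_flip[OF k] by (intro sum.cong) auto
      then show ?thesis using Ab finS by (auto simp: M_def M'_def emeasure_disc)
    qed
    show "1 - 2*mu \<le> measure (M i) (UNIV - {c (2*k), c (2*k+1)})" for i
      using pair_mass[OF k] by (auto simp: M_def)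
    show "0 \<le> 2*mu" using mu_pos by simp
    show "2*mu \<le> 1" using K by (simp add: mu_def field_simps)
    show "E \<in> sets (PiM {..<n} (\<lambda>_. borel))" by (rule Em)
  qed
  moreover have "real (card {..<n}) * (2*mu) \<le> 1/4" using nK K by (simp add: mu_def field_simps)
  moreover have "Q n \<phi> \<sigma> ws x = measure (PiM {..<n} M) E" by (simp add: Q_def Mw_def M_def E_def)
  moreover have "Q n \<phi> (flip k \<sigma>) ws x = measure (PiM {..<n} M') E"
    using spE by (simp add: Q_def Mw_def M'_def E_def M_def)
  ultimately show ?thesis by linarith
qed

abbreviation "Sig \<equiv> PiE {..<K} (\<lambda>_. UNIV :: bool set)"

lemma flip_Sig: "k < K \<Longrightarrow> \<sigma> \<in> Sig \<Longrightarrow> flip k \<sigma> \<in> Sig"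
  by (auto simp: flip_def PiE_iff extensional_def)

lemma flip_flip: "flip k (flip k \<sigma>) = \<sigma>" by (auto simp: flip_def)

lemma step3:
  assumes cl: "is_classifier n \<phi>" and ws: "ws \<in> WS n" and k: "k < K" and nK: "2*n \<le> K"
  shows "3/8 * card Sig \<le> (\<Sum>\<sigma>\<in>Sig. err n \<phi> \<sigma> ws k)"
proof -
  have pair: "3/4 \<le> err n \<phi> \<sigma> ws k + err n \<phi> (flip k \<sigma>) ws k" for \<sigma>
  proof -
    have "Q n \<phi> \<sigma> ws (c (2*k)) - Q n \<phi> (flip k \<sigma>) ws (c (2*k)) \<le> 1/4"
         "Q n \<phi> (flip k \<sigma>) ws (c (2*k)) - Q n \<phi> \<sigma> ws (c (2*k)) \<le> 1/4"
      using Q_close[OF cl ws k nK, of \<sigma> "c (2*k)"] unfolding abs_le_iff by linarith+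
    moreover have "flip k \<sigma> k = (\<not> \<sigma> k)" by (simp add: flip_def)
    ultimately show ?thesis unfolding err_def by (cases "\<sigma> k") auto
  qed
  have re: "(\<Sum>\<sigma>\<in>Sig. err n \<phi> (flip k \<sigma>) ws k) = (\<Sum>\<sigma>\<in>Sig. err n \<phi> \<sigma> ws k)"
    by (rule sum.reindex_bij_witness[where i="flip k" and j="flip k"]) (auto simp: flip_flip flip_Sig k)
  have "(\<Sum>\<sigma>\<in>Sig. 3/4) \<le> (\<Sum>\<sigma>\<in>Sig. err n \<phi> \<sigma> ws k + err n \<phi> (flip k \<sigma>) ws k)"
    by (intro sum_mono pair)
  then show ?thesis by (simp add: sum.distrib re)
qed

lemma main_bound:
  assumes cl: "is_classifier n \<phi>" and w: "0 < w" "w < 1" and nK: "2*n \<le> K"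
  shows "3/8 * h * card Sig \<le> (\<Sum>\<sigma>\<in>Sig. Exs n w \<phi> \<sigma>)"
proof -
  have "(\<Sum>\<sigma>\<in>Sig. (\<Sum>ws\<in>WS n. wt w n ws * (\<Sum>k<K. 4*mu*h * err n \<phi> \<sigma> ws k))) =
        (\<Sum>ws\<in>WS n. wt w n ws * (\<Sum>k<K. 4*mu*h * (\<Sum>\<sigma>\<in>Sig. err n \<phi> \<sigma> ws k)))"
  proof -
    have "(\<Sum>\<sigma>\<in>Sig. (\<Sum>ws\<in>WS n. wt w n ws * (\<Sum>k<K. 4*mu*h * err n \<phi> \<sigma> ws k))) =
        (\<Sum>ws\<in>WS n. (\<Sum>\<sigma>\<in>Sig. wt w n ws * (\<Sum>k<K. 4*mu*h * err n \<phi> \<sigma> ws k)))"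
      by (rule sum.swap)
    also have "\<dots> = (\<Sum>ws\<in>WS n. wt w n ws * (\<Sum>k<K. 4*mu*h * (\<Sum>\<sigma>\<in>Sig. err n \<phi> \<sigma> ws k)))"
    proof (intro sum.cong refl)
      fix ws
      have "(\<Sum>\<sigma>\<in>Sig. wt w n ws * (\<Sum>k<K. 4*mu*h * err n \<phi> \<sigma> ws k)) = wt w n ws * (\<Sum>\<sigma>\<in>Sig. \<Sum>k<K. 4*mu*h * err n \<phi> \<sigma> ws k)"
        by (rule sum_distrib_left[symmetric])
      also have "(\<Sum>\<sigma>\<in>Sig. \<Sum>k<K. 4*mu*h * err n \<phi> \<sigma> ws k) = (\<Sum>k<K. \<Sum>\<sigma>\<in>Sig. 4*mu*h * err n \<phi> \<sigma> ws k)"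
        by (rule sum.swap)
      also have "\<dots> = (\<Sum>k<K. 4*mu*h * (\<Sum>\<sigma>\<in>Sig. err n \<phi> \<sigma> ws k))"
        by (simp add: sum_distrib_left)
      finally show "(\<Sum>\<sigma>\<in>Sig. wt w n ws * (\<Sum>k<K. 4*mu*h * err n \<phi> \<sigma> ws k)) = wt w n ws * (\<Sum>k<K. 4*mu*h * (\<Sum>\<sigma>\<in>Sig. err n \<phi> \<sigma> ws k))" .
    qed
    finally show ?thesis .
  qed
  also have "\<dots> \<ge> (\<Sum>ws\<in>WS n. wt w n ws * (\<Sum>k<K. 4*mu*h * (3/8 * card Sig)))"
    using w mu_pos hH step3[OF cl _ _ nK]
    by (intro sum_mono mult_left_mono) auto
  also have "(\<Sum>ws\<in>WS n. wt w n ws * (\<Sum>k<K. 4*mu*h * (3/8 * card Sig))) = 3/8 * h * card Sig"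
  proof -
    have "(\<Sum>ws\<in>WS n. wt w n ws * (\<Sum>k<K. 4*mu*h * (3/8 * card Sig))) = (\<Sum>ws\<in>WS n. wt w n ws) * (\<Sum>k<K. 4*mu*h * (3/8 * card Sig))"
      by (rule sum_distrib_right[symmetric])
    also have "\<dots> = (\<Sum>k<K. 4*mu*h * (3/8 * card Sig))" by (simp only: weights_sum)
    also have "\<dots> = 3/8 * h * card Sig" using K by (simp add: mu_def field_simps)
    finally show ?thesis .
  qed
  finally have "3/8 * h * card Sig \<le> (\<Sum>\<sigma>\<in>Sig. (\<Sum>ws\<in>WS n. wt w n ws * (\<Sum>k<K. 4*mu*h * err n \<phi> \<sigma> ws k)))" .
  also have "\<dots> \<le> (\<Sum>\<sigma>\<in>Sig. Exs n w \<phi> \<sigma>)"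
    by (intro sum_mono step1[OF cl w])
  finally show ?thesis .
qed

end

context constr_geo
begin

lemma excess_lower:
  assumes cl: "is_classifier n \<phi>" and w: "0 < w" "w < 1" and nK: "2*n \<le> K" and kap: "\<kappa> \<le> H"
  shows "3/8 * h \<le> excess_risk Y C \<beta> \<kappa> n w \<phi>"
proof -
  have le: "Exs n w \<phi> \<sigma> \<le> excess_risk Y C \<beta> \<kappa> n w \<phi>" for \<sigma>
  proof -
    have "Exs n w \<phi> \<sigma> = (\<lambda>(PX, PY). prob_output n w PX PY PX \<phi> True + prob_output n w PX PY PY \<phi> False - 1 + tv_dist PX PY) (PX \<sigma>, PY \<sigma>)"
      by (simp add: Exs_def)
    also have "\<dots> \<le> excess_risk Y C \<beta> \<kappa> n w \<phi>"
    proof -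
      have "bdd_above ((\<lambda>(PX, PY). prob_output n w PX PY PX \<phi> True + prob_output n w PX PY PY \<phi> False - 1 + tv_dist PX PY) ` model_class Y C \<beta> \<kappa>)"
        by (rule excess_bdd) (use w in auto)
      then show ?thesis unfolding excess_risk_def using in_class[OF kap]
        by (intro cSUP_upper) auto
    qed
    finally show ?thesis .
  qed
  have "3/8 * h * card Sig \<le> (\<Sum>\<sigma>\<in>Sig. Exs n w \<phi> \<sigma>)" by (rule main_bound[OF cl w nK])
  also have "\<dots> \<le> (\<Sum>\<sigma>\<in>Sig. excess_risk Y C \<beta> \<kappa> n w \<phi>)" by (intro sum_mono le)
  also have "\<dots> = card Sig * excess_risk Y C \<beta> \<kappa> n w \<phi>" by simp
  finally have "card Sig * (3/8 * h) \<le> card Sig * excess_risk Y C \<beta> \<kappa> n w \<phi>" by (simp add: algebra_simps)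
  moreover have "card Sig > 0" by (simp add: card_PiE)
  ultimately show ?thesis by simp
qed

end




lemma pigeon3:
  fixes F :: "'a::metric_space set"
  assumes fin: "finite F" and D: "D > 0"
    and u: "D \<le> dist u0 u1" "D \<le> dist u0 u2" "D \<le> dist u1 u2"
  shows "\<exists>y0 z0 G. (y0, z0) \<in> {(u0, u1), (u0, u2), (u1, u2)} \<and> G \<subseteq> F \<and> card F \<le> 3 * card G \<and>
            (\<forall>x\<in>G. D/2 \<le> dist x y0 \<and> D/2 \<le> dist x z0)"
proof -
  define G where "G a b = {x\<in>F. D/2 \<le> dist x a \<and> D/2 \<le> dist x b}" for a b
  have near: False if "dist x a < D/2" "dist x b < D/2" "D \<le> dist a b" for x a b :: 'a
    using dist_triangle[of a b x] that by (simp add: dist_commute)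
  have "F \<subseteq> G u0 u1 \<union> G u0 u2 \<union> G u1 u2"
  proof
    fix x assume x: "x \<in> F"
    show "x \<in> G u0 u1 \<union> G u0 u2 \<union> G u1 u2"
    proof (rule ccontr)
      assume "x \<notin> G u0 u1 \<union> G u0 u2 \<union> G u1 u2"
      then have "(dist x u0 < D/2 \<or> dist x u1 < D/2) \<and> (dist x u0 < D/2 \<or> dist x u2 < D/2) \<and> (dist x u1 < D/2 \<or> dist x u2 < D/2)"
        using x by (auto simp: G_def not_le)
      then show False using near u by blast
    qed
  qed
  then have "card F \<le> card (G u0 u1 \<union> G u0 u2 \<union> G u1 u2)"
    by (rule card_mono[rotated]) (use fin in \<open>auto simp: G_def\<close>)
  also have "\<dots> \<le> card (G u0 u1) + card (G u0 u2) + card (G u1 u2)"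
    by (meson card_Un_le add_right_mono le_trans)
  finally have cF: "card F \<le> card (G u0 u1) + card (G u0 u2) + card (G u1 u2)" .
  have sub: "G a b \<subseteq> F" for a b by (auto simp: G_def)
  consider "card F \<le> 3 * card (G u0 u1)" | "card F \<le> 3 * card (G u0 u2)" | "card F \<le> 3 * card (G u1 u2)"
    using cF by linarith
  then show ?thesis
  proof cases
    case 1 then show ?thesis using sub by (intro exI[of _ u0] exI[of _ u1] exI[of _ "G u0 u1"]) (auto simp: G_def)
  next
    case 2 then show ?thesis using sub by (intro exI[of _ u0] exI[of _ u2] exI[of _ "G u0 u2"]) (auto simp: G_def)
  next
    case 3 then show ?thesis using sub by (intro exI[of _ u1] exI[of _ u2] exI[of _ "G u1 u2"]) (auto simp: G_def)
  qed
qed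

lemma lower_n:
  fixes Y :: "'a::polish_space set" and \<phi> :: "(nat \<Rightarrow> 'a) \<Rightarrow> (nat \<Rightarrow> bool) \<Rightarrow> 'a \<Rightarrow> bool"
  assumes Yb: "Y \<in> sets borel" and uY: "u0 \<in> Y" "u1 \<in> Y" "u2 \<in> Y"
    and u: "D \<le> dist u0 u1" "D \<le> dist u0 u2" "D \<le> dist u1 u2" and D: "D > 0"
    and s: "0 < s" and cov: "12*n+12 \<le> covering_number s Y"
    and H: "0 < H" "H \<le> 1/4" "2*H \<le> C * (D/2) powr \<beta>" and \<beta>: "\<beta> > 0" and C: "C > 0"
    and hH: "C * s powr \<beta> / 2 \<le> H" and kap: "\<kappa> \<le> H"
    and cl: "is_classifier n \<phi>" and w: "0 < w" "w < 1"
  shows "3/16 * C * s powr \<beta> \<le> excess_risk Y C \<beta> \<kappa> n w \<phi>"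
proof -
  obtain F where F: "F \<subseteq> Y" "finite F" "card F = 12*n+12" "\<forall>x\<in>F. \<forall>y\<in>F. x \<noteq> y \<longrightarrow> s \<le> dist x y"
    using packing[OF s cov] by blast
  obtain y0 z0 G where yz: "(y0, z0) \<in> {(u0, u1), (u0, u2), (u1, u2)}" and G: "G \<subseteq> F" "card F \<le> 3 * card G"
      and far: "\<forall>x\<in>G. D/2 \<le> dist x y0 \<and> D/2 \<le> dist x z0"
    using pigeon3[OF F(2) D u] by blast
  have y0z0: "y0 \<in> Y" "z0 \<in> Y" "D \<le> dist y0 z0" using yz uY u by auto
  define K where "K = 2*n+2"
  have cG: "2*K \<le> card G" using G F(3) by (simp add: K_def)
  obtain G' where G': "G' \<subseteq> G" "card G' = 2*K" "finite G'" using obtain_subset_with_card_n[OF cG] by blast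
  obtain c where c: "bij_betw c {0..<card G'} G'" using ex_bij_betw_nat_finite[OF G'(3)] by blast
  have cinj: "inj_on c {..<2*K}" and cim: "c ` {..<2*K} = G'"
    using c G'(2) by (auto simp: bij_betw_def atLeast0LessThan)
  have cG'': "c i \<in> G" if "i < 2*K" for i using cim G'(1) that by auto
  define h where "h = C * s powr \<beta> / 2"
  have h0: "0 < h" using C s by (simp add: h_def)
  have DD: "C * (D/2) powr \<beta> \<le> C * x powr \<beta>" if "D/2 \<le> x" for x
    using that D \<beta> C by (intro mult_left_mono powr_mono2) auto
  have cax: "constr y0 z0 c K H h"
  proof
    show "0 < K" by (simp add: K_def)
    show "inj_on c {..<2*K}" by (rule cinj)
    show "y0 \<noteq> z0" using y0z0 D by auto
    show "y0 \<notin> c ` {..<2*K}" using far cG'' D by force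
    show "z0 \<notin> c ` {..<2*K}" using far cG'' D by force
    show "0 < h" "h \<le> H" "H \<le> 1/4" using h0 hH H by (auto simp: h_def)
  qed
  interpret constr_geo y0 z0 c K H h Y C \<beta>
  proof (rule constr_geo.intro[OF cax], unfold_locales)
    show "constr.S y0 z0 c K \<subseteq> Y" using y0z0 cG'' G F by (auto simp: constr.S_def[OF cax])
    show "Y \<in> sets borel" by (rule Yb)

    show "2*h \<le> C * dist (c i) (c j) powr \<beta>" if "i < 2*K" "j < 2*K" "i \<noteq> j" for i j
    proof -
      have "c i \<noteq> c j" using inj_onD[OF cinj, of i j] that by auto
      then have "s \<le> dist (c i) (c j)" using F(4) cG'' that G by auto
      then show ?thesis unfolding h_def using s \<beta> C by (auto intro!: mult_left_mono powr_mono2)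
    qed
    show "2*H \<le> C * dist (c i) y0 powr \<beta>" if "i < 2*K" for i
      using far cG''[OF that] DD[of "dist (c i) y0"] H by force
    show "2*H \<le> C * dist (c i) z0 powr \<beta>" if "i < 2*K" for i
      using far cG''[OF that] DD[of "dist (c i) z0"] H by force
    show "2*H \<le> C * dist y0 z0 powr \<beta>"
      using y0z0 D DD[of "dist y0 z0"] H by force
  qed
  have "3/8 * h \<le> excess_risk Y C \<beta> \<kappa> n w \<phi>"
    by (rule excess_lower[OF cl w _ kap]) (simp add: K_def)
  then show ?thesis by (simp add: h_def)
qed




lemma ev_small:
  fixes c0 \<gamma> t :: real
  assumes c0: "0 < c0" and g: "0 < \<gamma>" and t: "0 < t"
  shows "eventually (\<lambda>n. (c0 / ln (12 * real n + 12)) powr (1/\<gamma>) < t) sequentially"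
proof -
  define T where "T = c0 / t powr \<gamma>"
  have T: "T > 0" using c0 t by (simp add: T_def)
  have "eventually (\<lambda>n. nat \<lceil>exp T\<rceil> + 1 \<le> n) sequentially" by (rule eventually_ge_at_top)
  then show ?thesis
  proof eventually_elim
    case (elim n)
    have a: "exp T \<le> real (nat \<lceil>exp T\<rceil>)" by (rule real_nat_ceiling_ge)
    have b: "real (nat \<lceil>exp T\<rceil> + 1) \<le> real n" using elim by (simp only: of_nat_le_iff)
    then have b': "real (nat \<lceil>exp T\<rceil>) + 1 \<le> real n" by (simp only: of_nat_add of_nat_1)
    have "exp T < real n" using a b' by linarith
    moreover have "0 < real n" using \<open>exp T < real n\<close> exp_gt_zero[of T] by linarith
    ultimately have "ln (exp T) < ln (real n)" by (subst ln_less_cancel_iff) auto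
    then have lnT: "T < ln (real n)" by simp
    have n0: "real n > 0" using elim by simp
    have "ln (real n) \<le> ln (12 * real n + 12)" using n0 by simp
    then have L: "T < ln (12 * real n + 12)" using lnT by linarith
    have "c0 / ln (12 * real n + 12) < c0 / T"
      using L T c0 by (intro divide_strict_left_mono) auto
    also have "c0 / T = t powr \<gamma>" using c0 t by (simp add: T_def)
    finally have "(c0 / ln (12 * real n + 12)) powr (1/\<gamma>) < (t powr \<gamma>) powr (1/\<gamma>)"
      using g c0 L T by (intro powr_less_mono2) auto
    also have "\<dots> = t" using g t by (simp add: powr_powr)
    finally show ?case .
  qed
qed

theorem theorem4:
  fixes Y :: "'a::polish_space set"
    and s0 c0 c1 \<gamma> C \<beta> w :: real
  assumes "Y \<in> sets borel"
    and "s0 > 0" and "0 < c0" and "c0 < c1" and "\<gamma> > 0"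
    and "\<And>s. 0 < s \<Longrightarrow> s < s0 \<Longrightarrow>
           c0 * s powr (-\<gamma>) \<le> ln (real (covering_number s Y)) \<and>
           ln (real (covering_number s Y)) \<le> c1 * s powr (-\<gamma>)"
    and "C > 0" and "0 < \<beta>" and "\<beta> \<le> 1"
    and "0 < w" and "w < 1"
  shows "\<exists>\<kappa>0>0. \<forall>\<kappa>. 0 < \<kappa> \<and> \<kappa> < \<kappa>0 \<longrightarrow>
           (\<forall>\<phi> :: nat \<Rightarrow> (nat \<Rightarrow> 'a) \<Rightarrow> (nat \<Rightarrow> bool) \<Rightarrow> 'a \<Rightarrow> bool.
              (\<forall>n. is_classifier n (\<phi> n)) \<longrightarrow>
              0 < liminf (\<lambda>n. ereal (ln (real n) powr (\<beta> / \<gamma>) * excess_risk Y C \<beta> \<kappa> n w (\<phi> n))))"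
proof -
  note Yb = assms(1) and s0 = assms(2) and c0 = assms(3) and g = assms(5) and cov = assms(6)
    and C = assms(7) and \<beta> = assms(8) and w = assms(10,11)
  have covb: "exp (c0 * s powr (-\<gamma>)) \<le> real (covering_number s Y)" if s: "0 < s" "s < s0" for s
  proof -
    have t: "0 < c0 * s powr (-\<gamma>)" using s c0 by simp
    have l: "c0 * s powr (-\<gamma>) \<le> ln (real (covering_number s Y))" using cov[OF s] by blast
    have pos: "covering_number s Y > 0"
    proof (rule ccontr)
      assume "\<not> covering_number s Y > 0"
      then have "covering_number s Y = 0" by simp
      then show False using l t by simp
    qed
    have "exp (c0 * s powr (-\<gamma>)) \<le> exp (ln (real (covering_number s Y)))" using l by simp
    also have "\<dots> = real (covering_number s Y)" using pos by simp
    finally show ?thesis .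
  qed
  define s1 where "s1 = min (s0/2) ((c0/2) powr (1/\<gamma>))"
  have s1: "0 < s1" "s1 < s0" using s0 c0 by (auto simp: s1_def)
  have "(c0/2) powr (-1) \<le> s1 powr (-\<gamma>)"
  proof -
    have "s1 powr (-\<gamma>) \<ge> ((c0/2) powr (1/\<gamma>)) powr (-\<gamma>)"
      using s1 g by (intro powr_mono2') (auto simp: s1_def)
    also have "((c0/2) powr (1/\<gamma>)) powr (-\<gamma>) = (c0/2) powr (-1)"
      using g by (simp add: powr_powr)
    finally show ?thesis .
  qed
  then have "2 / c0 \<le> s1 powr (-\<gamma>)" using c0 by (simp add: powr_minus_divide)
  then have "2 \<le> c0 * s1 powr (-\<gamma>)" using c0 by (simp add: field_simps)
  then have "exp 2 \<le> exp (c0 * s1 powr (-\<gamma>))" by simp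
  moreover have "3 \<le> exp (2::real)" using exp_ge_add_one_self[of 2] by simp
  ultimately have "3 \<le> real (covering_number s1 Y)" using covb[OF s1] by linarith
  then have c3: "3 \<le> covering_number s1 Y" by simp
  obtain F3 where F3: "F3 \<subseteq> Y" "finite F3" "card F3 = 3" "\<forall>x\<in>F3. \<forall>y\<in>F3. x \<noteq> y \<longrightarrow> s1 \<le> dist x y"
    using packing[OF s1(1) c3] by (elim exE conjE) simp
  from F3(3) obtain u0 u1 u2 where u: "F3 = {u0, u1, u2}" "u0 \<noteq> u1" "u1 \<noteq> u2" "u0 \<noteq> u2"
    unfolding card_3_iff by blast
  have uY: "u0 \<in> Y" "u1 \<in> Y" "u2 \<in> Y" using F3 u by auto
  have ud: "s1 \<le> dist u0 u1" "s1 \<le> dist u0 u2" "s1 \<le> dist u1 u2" using F3(4) u by auto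
  define H where "H = min (1/4) (C * (s1/2) powr \<beta> / 2)"
  have Hp: "0 < H" "H \<le> 1/4" "2*H \<le> C * (s1/2) powr \<beta>" using C s1 by (auto simp: H_def)
  show ?thesis
  proof (intro exI[of _ H] conjI allI impI)
    show "0 < H" by fact
    fix \<kappa> :: real and \<phi> :: "nat \<Rightarrow> (nat \<Rightarrow> 'a) \<Rightarrow> (nat \<Rightarrow> bool) \<Rightarrow> 'a \<Rightarrow> bool"
    assume kap: "0 < \<kappa> \<and> \<kappa> < H" and cl: "\<forall>n. is_classifier n (\<phi> n)"
    define \<epsilon> where "\<epsilon> = 3/16 * C * (c0/2) powr (\<beta>/\<gamma>)"
    have \<epsilon>: "0 < \<epsilon>" using C c0 by (simp add: \<epsilon>_def)
    have e1: "eventually (\<lambda>n. (c0 / ln (12 * real n + 12)) powr (1/\<gamma>) < s0) sequentially"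
      by (rule ev_small[OF c0 g s0])
    have e2: "eventually (\<lambda>n. (c0 / ln (12 * real n + 12)) powr (1/\<gamma>) < (2*H/C) powr (1/\<beta>)) sequentially"
      using Hp C by (intro ev_small[OF c0 g]) simp
    have e3: "eventually (\<lambda>n. 13 \<le> n) sequentially" by (rule eventually_ge_at_top)
    have "eventually (\<lambda>n. ereal \<epsilon> \<le> ereal (ln (real n) powr (\<beta> / \<gamma>) * excess_risk Y C \<beta> \<kappa> n w (\<phi> n))) sequentially"
      using e1 e2 e3
    proof eventually_elim
      case (elim n)
      define L where "L = ln (12 * real n + 12)"
      define s where "s = (c0 / L) powr (1/\<gamma>)"
      have L: "0 < L" by (simp add: L_def)
      have sp: "0 < s" using L c0 by (simp add: s_def)
      have ss0: "s < s0" using elim by (simp add: s_def L_def)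
      have "s powr (-\<gamma>) = (c0 / L) powr (-1)" using g by (simp add: s_def powr_powr)
      also have "\<dots> = L / c0" using L c0 by (simp add: powr_minus_divide)
      finally have "c0 * s powr (-\<gamma>) = L" using c0 by simp
      then have "exp L \<le> real (covering_number s Y)" using covb[OF sp ss0] by simp
      moreover have "exp L = 12 * real n + 12" unfolding L_def by simp
      ultimately have cv: "12*n+12 \<le> covering_number s Y" by linarith
      have sb: "s powr \<beta> = (c0 / L) powr (\<beta>/\<gamma>)" by (simp add: s_def powr_powr)
      have hH: "C * s powr \<beta> / 2 \<le> H"
      proof -
        have "s powr \<beta> < ((2*H/C) powr (1/\<beta>)) powr \<beta>"
          using elim sp \<beta> by (intro powr_less_mono2) (auto simp: s_def L_def)
        also have "\<dots> = 2*H/C" using \<beta> Hp C by (simp add: powr_powr)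
        finally show ?thesis using C by (simp add: field_simps)
      qed
      have low: "3/16 * C * s powr \<beta> \<le> excess_risk Y C \<beta> \<kappa> n w (\<phi> n)"
        by (rule lower_n[OF Yb uY ud s1(1) sp cv Hp \<beta> C hH _ cl[rule_format] w]) (use kap in simp)
      have n13: "real n \<ge> 13" using elim by simp
      have q: "13 * real n \<le> real n * real n" using n13 by (intro mult_right_mono) auto
      then have q2: "12 * real n + 12 \<le> real n * real n" using n13 by linarith
      have "L \<le> ln (real n * real n)" unfolding L_def using q2 n13
        by (subst ln_le_cancel_iff) auto
      also have "\<dots> = 2 * ln (real n)" using n13 by (simp add: ln_mult)
      finally have L2: "L \<le> 2 * ln (real n)" .
      have lnp: "0 < ln (real n)" using n13 by simp
      have "c0 / 2 \<le> ln (real n) * (c0 / L)"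
        using L2 L lnp c0 by (simp add: field_simps)
      then have "(c0/2) powr (\<beta>/\<gamma>) \<le> (ln (real n) * (c0 / L)) powr (\<beta>/\<gamma>)"
        using c0 \<beta> g by (intro powr_mono2) auto
      also have "\<dots> = ln (real n) powr (\<beta>/\<gamma>) * s powr \<beta>"
        unfolding sb by (rule powr_mult)
      finally have "\<epsilon> \<le> ln (real n) powr (\<beta>/\<gamma>) * (3/16 * C * s powr \<beta>)"
        using C by (simp add: \<epsilon>_def algebra_simps)
      also have "\<dots> \<le> ln (real n) powr (\<beta>/\<gamma>) * excess_risk Y C \<beta> \<kappa> n w (\<phi> n)"
        by (intro mult_left_mono low) simp
      finally show ?case by simp
    qed
    then have "ereal \<epsilon> \<le> liminf (\<lambda>n. ereal (ln (real n) powr (\<beta> / \<gamma>) * excess_risk Y C \<beta> \<kappa> n w (\<phi> n)))"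
      by (rule Liminf_bounded)
    then show "0 < liminf (\<lambda>n. ereal (ln (real n) powr (\<beta> / \<gamma>) * excess_risk Y C \<beta> \<kappa> n w (\<phi> n)))"
      using \<epsilon> by (meson ereal_less(2) less_le_trans)
  qed
qed


end
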